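(* For every continuous $c:\mathcal{N}\to[0;1]$ there is a continuous function $\mathcal{F}_c:\mathrm{PrTr}_2\to\mathbf{K}$ such that for every $T\in\mathrm{PrTr}_2$, the compact set $\mathcal{F}_c(T)$ is the closed offspring of $T$ determined by some compliant family $(D_t)_{t\in T}$, and for every $x\in[T]$ one has $x\in\mathcal{N}\iff\mathcal{O}_{\mathcal{F}_c(T)}(\overline{x})=0$; moreover for $x\in[T]\cap\mathcal{N}$, $\mathcal{D}_{\mathcal{F}_c(T)}(\overline{x})=c(x)$.
   Context: $2^{\omega}$ is the Cantor space; $N_s=\{x\in2^\omega:s\subset x\}$; $\mu$ is the coin-tossing measure, $\mu(N_s)=2^{-\mathrm{lh}(s)}$. For measurable $A$, $\mathcal{D}_A(z)=\lim_n\mu(A\cap N_{z\restriction n})/\mu(N_{z\restriction n})$ when it exists, and $\mathcal{O}_A(z)=\limsup_n-\liminf_n$ of those ratios (the oscillation). $A$ is dualistic if $\mathcal{D}_A(z)$ exists and lies in $\{0,1\}$ for all $z$. $\mathcal{N}=\{y\in2^\omega:y(n)=1\text{ for infinitely many }n\}$. $\mathrm{PrTr}_2$ is the set of pruned trees on $\{0,1\}$ (nonempty sets of finite binary sequences closed under initial segments, every node having a proper extension), viewed as a subspace of $2^{(2^{<\omega})}\cong2^\omega$ (a $G_\delta$, hence Polish); $[T]$ is the set of branches. $\mathbf{K}$ is the Polish space of compact subsets of $2^\omega$ with the Vietoris topology. The stretch of $s\in2^{\le\omega}$ is $\overline{s}=s(0)^{(1)}{}^\frown s(1)^{(2)}{}^\frown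 s(2)^{(3)}\cdots$ ($s(j)$ repeated $j+1$ times). $\mathrm{Fl}(n)=2^{n+1}\setminus\{0^{(n+1)},1^{(n+1)}\}$. A family $(D_t)_{t\in T}$ is compliant if each $D_t$ is dualistic, $\emptyset\ne D_t\ne2^\omega$, and $\mu(\operatorname{Int}D_t)=\mu(\operatorname{Cl}D_t)$; its closed offspring is $\overline{[T]}\cup\bigcup\{\overline{t}^\frown a^\frown\operatorname{Cl}D_t:t\in T,\ a\in\mathrm{Fl}(\mathrm{lh}\,t)\}$, where $\overline{[T]}=\{\overline{x}:x\in[T]\}$. *)

theory Defs
  imports "HOL-Probability.Probability"
begin

type_synonym cantor = "nat \<Rightarrow> bool"

definition cantor_top :: "cantor topology" where
  "cantor_top = product_topology (\<lambda>_. discrete_topology UNIV) UNIV"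

definition restr :: "cantor \<Rightarrow> nat \<Rightarrow> bool list" where
  "restr z n = map z [0..<n]"

definition Nbhd :: "bool list \<Rightarrow> cantor set" where
  "Nbhd s = {x. restr x (length s) = s}"

definition mu :: "cantor measure" where
  "mu = PiM UNIV (\<lambda>_::nat. measure_pmf (pmf_of_set (UNIV :: bool set)))"

text \<open>Measurable = Lebesgue measurable, i.e. in the completion of mu.\<close>
definition ratio :: "cantor set \<Rightarrow> cantor \<Rightarrow> nat \<Rightarrow> real" where
  "ratio A z n = measure (completion mu) (A \<inter> Nbhd (restr z n)) / measure (completion mu) (Nbhd (restr z n))"

definition has_density :: "cantor set \<Rightarrow> cantor \<Rightarrow> real \<Rightarrow> bool" where
  "has_density A z d \<longleftrightarrow> (ratio A z \<longlonglongrightarrow> d)"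

definition oscillation :: "cantor set \<Rightarrow> cantor \<Rightarrow> ereal" where
  "oscillation A z = limsup (\<lambda>n. ereal (ratio A z n)) - liminf (\<lambda>n. ereal (ratio A z n))"

definition dualistic :: "cantor set \<Rightarrow> bool" where
  "dualistic A \<longleftrightarrow> A \<in> sets (completion mu) \<and> (\<forall>z. has_density A z 0 \<or> has_density A z 1)"

definition Ncal :: "cantor set" where
  "Ncal = {y. infinite {n. y n}}"

definition PrTr2 :: "bool list set set" where
  "PrTr2 = {T. T \<noteq> {} \<and> (\<forall>s\<in>T. \<forall>n. take n s \<in> T) \<and> (\<forall>s\<in>T. \<exists>u\<in>T. length s < length u \<and> take (length s) u = s)}"

text \<open>Topology on sets of finite sequences = product topology on 2^(2^{<omega}).\<close>
definition tree_top :: "bool list set topology" where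
  "tree_top = topology_generated_by (range (\<lambda>s. {T. s \<in> T}) \<union> range (\<lambda>s. {T. s \<notin> T}))"

definition branches :: "bool list set \<Rightarrow> cantor set" where
  "branches T = {x. \<forall>n. restr x n \<in> T}"

definition vietoris :: "cantor set topology" where
  "vietoris = subtopology
     (topology_generated_by ({{K. K \<subseteq> U} | U. openin cantor_top U} \<union> {{K. K \<inter> U \<noteq> {}} | U. openin cantor_top U}))
     {K. compactin cantor_top K}"

text \<open>Stretch of finite and infinite sequences: s(j) repeated j+1 times.\<close>
definition stretch_list :: "bool list \<Rightarrow> bool list" where
  "stretch_list s = concat (map (\<lambda>j. replicate (j+1) (s ! j)) [0..<length s])"

definition stretch :: "cantor \<Rightarrow> cantor" where
  "stretch x n = x (LEAST k. n < (k+1)*(k+2) div 2)"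

definition Fl :: "nat \<Rightarrow> bool list set" where
  "Fl n = {a. length a = n+1 \<and> a \<noteq> replicate (n+1) False \<and> a \<noteq> replicate (n+1) True}"

definition cat :: "bool list \<Rightarrow> cantor \<Rightarrow> cantor" where
  "cat u x n = (if n < length u then u ! n else x (n - length u))"

definition compliant :: "bool list set \<Rightarrow> (bool list \<Rightarrow> cantor set) \<Rightarrow> bool" where
  "compliant T D \<longleftrightarrow> (\<forall>t\<in>T. dualistic (D t) \<and> D t \<noteq> {} \<and> D t \<noteq> UNIV \<and>
      measure mu (cantor_top interior_of (D t)) = measure mu (cantor_top closure_of (D t)))"

definition closed_offspring :: "bool list set \<Rightarrow> (bool list \<Rightarrow> cantor set) \<Rightarrow> cantor set" where
  "closed_offspring T D = stretch ` branches T \<union>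
     (\<Union>t\<in>T. \<Union>a\<in>Fl (length t). cat (stretch_list t @ a) ` (cantor_top closure_of (D t)))"

end

theory Submission
  imports Defs
begin

fun tri :: "nat \<Rightarrow> nat" where "tri 0 = 0" | "tri (Suc n) = tri n + Suc n"

lemma tri_twice: "2 * tri n = n * (n + 1)"
  by (induction n) (auto simp: algebra_simps)

lemma tri_div: "n * (n + 1) div 2 = tri n"
  by (metis tri_twice nonzero_mult_div_cancel_left zero_neq_numeral)

lemma tri_mono: "m \<le> n \<Longrightarrow> tri m \<le> tri n"
  by (induction n) (auto simp: le_Suc_eq)

lemma tri_strict: "m < n \<Longrightarrow> tri m < tri n"
proof (induction n)
  case 0 then show ?case by simp
next
  case (Suc n) then show ?case
    by (auto simp: less_Suc_eq)
qed

lemma tri_inj: "tri m = tri n \<Longrightarrow> m = n"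
  by (metis linorder_neqE_nat tri_strict less_irrefl)

lemma tri_ge: "n \<le> tri n"
  by (induction n) auto

lemma length_restr[simp]: "length (restr z n) = n"
  by (simp add: restr_def)

lemma restr_add: "restr z (a + b) = restr z a @ map z [a..<a+b]"
  proof -
  have "[0..<a + b] = [0..<a] @ [a..<a+b]" by (rule upt_add_eq_append) simp
  then show ?thesis by (simp add: restr_def)
qed

lemma restr_Suc: "restr z (Suc n) = restr z n @ [z n]"
  by (simp add: restr_def)

lemma nth_restr[simp]: "i < n \<Longrightarrow> restr z n ! i = z i"
  by (simp add: restr_def)

lemma take_restr: "m \<le> n \<Longrightarrow> take m (restr z n) = restr z m"
  by (simp add: restr_def take_map)

lemma restr_eq_iff: "restr z n = restr w n \<longleftrightarrow> (\<forall>i<n. z i = w i)"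
  by (auto simp: restr_def)

lemma length_stretch_list[simp]: "length (stretch_list s) = tri (length s)"
proof -
  have "length (stretch_list s) = (\<Sum>j<length s. j + 1)"
    by (simp add: stretch_list_def length_concat sum_list_sum_nth atLeast0LessThan o_def)
  also have "\<dots> = tri (length s)"
  proof -
    have "\<And>n. (\<Sum>j<n. j + 1) = tri n" by (induct_tac n) auto
    then show ?thesis by blast
  qed
  finally show ?thesis .
qed

lemma stretch_list_snoc: "stretch_list (s @ [b]) = stretch_list s @ replicate (length s + 1) b"
proof -
  have "map (\<lambda>j. replicate (j+1) ((s@[b]) ! j)) [0..<length s] = map (\<lambda>j. replicate (j+1) (s ! j)) [0..<length s]"
    by (rule map_cong) (auto simp: nth_append)
  then show ?thesis unfolding stretch_list_def by (simp only: length_append_singleton upt_Suc_append[OF le0] map_append concat_append) simp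
qed

lemma stretch_list_Nil[simp]: "stretch_list [] = []"
  by (simp add: stretch_list_def)

lemma stretch_list_take: "m \<le> length s \<Longrightarrow> take (tri m) (stretch_list s) = stretch_list (take m s)"
proof (induction s rule: rev_induct)
  case Nil then show ?case by simp
next
  case (snoc b s)
  show ?case
  proof (cases "m \<le> length s")
    case True
    then have "tri m \<le> length (stretch_list s)" by (simp add: tri_mono)
    then show ?thesis using True snoc by (simp add: stretch_list_snoc)
  next
    case False
    then have "m = length s + 1" using snoc by simp
    then show ?thesis by (simp add: stretch_list_snoc)
  qed
qed

lemma stretch_list_inj: "stretch_list s = stretch_list s' \<Longrightarrow> s = s'"
proof (induction s arbitrary: s' rule: rev_induct)
  case Nil then show ?case
    by (metis length_stretch_list list.size(3) tri.simps(1) tri_inj length_0_conv)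
next
  case (snoc b s)
  have "length s' = Suc (length s)"
    using snoc.prems by (metis length_stretch_list tri_inj length_append_singleton)
  then obtain s'' b' where s': "s' = s'' @ [b']" "length s'' = length s"
    by (metis length_Suc_conv_rev)
  then have "stretch_list s @ replicate (length s + 1) b = stretch_list s'' @ replicate (length s + 1) b'"
    using snoc.prems by (simp add: stretch_list_snoc)
  then have "stretch_list s = stretch_list s''" "b = b'"
    using s'(2) by (auto simp: append_eq_append_conv)
  then show ?case using snoc.IH s' by simp
qed

lemma stretch_least: "tri n \<le> i \<Longrightarrow> i < tri (Suc n) \<Longrightarrow> (LEAST k. i < (k+1)*(k+2) div 2) = n"
proof -
  assume a: "tri n \<le> i" "i < tri (Suc n)"
  have e: "\<And>k. (k+1)*(k+2) div 2 = tri (Suc k)"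
    using tri_div by (metis Suc_eq_plus1 add_Suc_right one_add_one)
  show ?thesis unfolding e
  proof (rule Least_equality)
    show "i < tri (Suc n)" by fact
    fix k assume "i < tri (Suc k)"
    then show "n \<le> k" using a(1)
      by (metis not_less_eq_eq tri_mono le_trans not_le)
  qed
qed

lemma stretch_block: "tri n \<le> i \<Longrightarrow> i < tri (Suc n) \<Longrightarrow> stretch x i = x n"
  unfolding stretch_def by (subst stretch_least[of n i]) simp_all

lemma restr_stretch_tri: "restr (stretch x) (tri n) = stretch_list (restr x n)"
proof (induction n)
  case 0 then show ?case by (simp add: restr_def)
next
  case (Suc n)
  have "map (stretch x) [tri n..<tri n + Suc n] = replicate (Suc n) (x n)"
    by (rule nth_equalityI) (simp_all del: upt_Suc replicate.simps add: stretch_block)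
  then show ?case
    using Suc unfolding tri.simps(2) restr_add by (simp only: restr_Suc stretch_list_snoc length_restr) simp
qed

lemma restr_stretch_block: "k \<le> Suc n \<Longrightarrow> restr (stretch x) (tri n + k) = stretch_list (restr x n) @ replicate k (x n)"
proof -
  assume k: "k \<le> Suc n"
  have "map (stretch x) [tri n..<tri n + k] = replicate k (x n)"
    using k by (intro nth_equalityI) (simp_all del: upt_Suc add: stretch_block)
  then show ?thesis by (simp add: restr_add restr_stretch_tri del: upt_Suc)
qed

lemma block_decomp: "\<exists>n k. N = tri n + k \<and> k \<le> n"
proof (induction N)
  case 0 then show ?case by (rule exI[of _ 0]) simp
next
  case (Suc N)
  then obtain n k where "N = tri n + k" "k \<le> n" by blast
  then show ?case
    by (cases "k = n") (auto intro: exI[of _ "Suc n"] exI[of _ 0] exI[of _ n] exI[of _ "Suc k"])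
qed

definition cat_ok :: "bool list \<Rightarrow> cantor \<Rightarrow> nat \<Rightarrow> bool list" where "cat_ok u z k = u @ restr z k"

lemma restr_cat: "restr (cat u z) (length u + k) = u @ restr z k"
  by (rule nth_equalityI) (auto simp: cat_def nth_append)

lemma restr_cat_le: "n \<le> length u \<Longrightarrow> restr (cat u z) n = take n u"
  by (rule nth_equalityI) (auto simp: cat_def)

lemma cat_restr_shift: "restr w (length u) = u \<Longrightarrow> w = cat u (\<lambda>i. w (length u + i))"
proof -
  assume a: "restr w (length u) = u"
  have "w i = u ! i" if "i < length u" for i
    using nth_restr[OF that, of w] a by simp
  then show ?thesis by (auto simp: cat_def fun_eq_iff)
qed

lemma mem_Nbhd: "z \<in> Nbhd s \<longleftrightarrow> restr z (length s) = s"
  by (simp add: Nbhd_def)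

lemma Nbhd_restr_mono: "m \<le> n \<Longrightarrow> Nbhd (restr z n) \<subseteq> Nbhd (restr z m)"
  by (auto simp: mem_Nbhd restr_eq_iff)

lemma topspace_cantor[simp]: "topspace cantor_top = UNIV"
  by (simp add: cantor_top_def)

lemma compact_cantor: "compact_space cantor_top"
  unfolding cantor_top_def
  by (rule compact_space_product_topology[THEN iffD2], rule disjI2) (simp add: compact_space_discrete_topology)

lemma Nbhd_PiE: "Nbhd s = Pi\<^sub>E UNIV (\<lambda>i. if i < length s then {s!i} else UNIV)"
proof (intro set_eqI iffI)
  fix z assume "z \<in> Nbhd s"
  then have "\<And>i. i < length s \<Longrightarrow> z i = s ! i"
    by (metis mem_Nbhd nth_restr)
  then show "z \<in> Pi\<^sub>E UNIV (\<lambda>i. if i < length s then {s!i} else UNIV)" by (simp add: PiE_def Pi_def)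
next
  fix z assume a: "z \<in> Pi\<^sub>E UNIV (\<lambda>i. if i < length s then {s!i} else UNIV)"
  have "z i = s ! i" if "i < length s" for i
    using PiE_mem[OF a, of i] that by simp
  then show "z \<in> Nbhd s" unfolding mem_Nbhd by (intro nth_equalityI) auto
qed
lemma openin_Nbhd: "openin cantor_top (Nbhd s)"
proof -
  have "finite {i. (if i < length s then {s!i} else UNIV) \<noteq> (UNIV::bool set)}"
    by (rule finite_subset[of _ "{..<length s}"]) auto
  then show ?thesis
    unfolding cantor_top_def Nbhd_PiE
    by (intro product_topology_basis) simp_all
qed

lemma openin_cantor_Nbhd:
  assumes "openin cantor_top U" "z \<in> U"
  shows "\<exists>n. Nbhd (restr z n) \<subseteq> U"
proof -
  have "\<exists>V. finite {i \<in> UNIV. V i \<noteq> topspace (discrete_topology (UNIV::bool set))} \<and>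
      (\<forall>i \<in> UNIV. openin (discrete_topology UNIV) (V i)) \<and> z \<in> Pi\<^sub>E UNIV V \<and> Pi\<^sub>E UNIV V \<subseteq> U"
  proof -
    have "openin (product_topology (\<lambda>_. discrete_topology (UNIV::bool set)) UNIV) U"
      using assms(1) by (simp add: cantor_top_def)
    then have "\<forall>x\<in>U. \<exists>V. finite {i \<in> UNIV. V i \<noteq> topspace (discrete_topology (UNIV::bool set))} \<and>
      (\<forall>i \<in> UNIV. openin (discrete_topology UNIV) (V i)) \<and> x \<in> Pi\<^sub>E UNIV V \<and> Pi\<^sub>E UNIV V \<subseteq> U"
      by (simp only: openin_product_topology_alt)
    then show ?thesis using assms(2) by (rule bspec)
  qed
  then obtain V where V: "finite {i. V i \<noteq> (UNIV::bool set)}" "z \<in> Pi\<^sub>E UNIV V" "Pi\<^sub>E UNIV V \<subseteq> U"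
    by (auto simp del: PiE_UNIV_domain)
  obtain n where n0: "{i. V i \<noteq> UNIV} \<subseteq> {..<n}"
    using finite_nat_bounded[OF V(1)] by (elim exE)
  have n: "\<And>i. i \<in> {i. V i \<noteq> UNIV} \<Longrightarrow> i < n" using n0 by (simp add: subset_iff)
  have "Nbhd (restr z n) \<subseteq> Pi\<^sub>E UNIV V"
  proof
    fix y assume "y \<in> Nbhd (restr z n)"
    then have yz: "\<And>i. i < n \<Longrightarrow> y i = z i" by (simp add: mem_Nbhd restr_eq_iff)
    have "y i \<in> V i" for i
    proof (cases "i < n")
      case True then show ?thesis using yz[OF True] PiE_mem[OF V(2), of i] by simp
    next
      case False then have "V i = UNIV" using n[of i] by auto
      then show ?thesis by simp
    qed
    then show "y \<in> Pi\<^sub>E UNIV V" by (simp add: PiE_def Pi_def)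
  qed
  then show ?thesis using V(3) by blast
qed

lemma openin_cantor_iff:
  "openin cantor_top U \<longleftrightarrow> (\<forall>z\<in>U. \<exists>n. Nbhd (restr z n) \<subseteq> U)"
proof
  assume a: "\<forall>z\<in>U. \<exists>n. Nbhd (restr z n) \<subseteq> U"
  show "openin cantor_top U"
  proof (subst openin_subopen, intro ballI)
    fix z assume "z \<in> U"
    then obtain n where "Nbhd (restr z n) \<subseteq> U" using a by blast
    moreover have "z \<in> Nbhd (restr z n)" by (simp add: mem_Nbhd)
    ultimately show "\<exists>T. openin cantor_top T \<and> z \<in> T \<and> T \<subseteq> U" using openin_Nbhd by blast
  qed
qed (use openin_cantor_Nbhd in blast)

definition OS :: "bool list set \<Rightarrow> (bool list \<Rightarrow> cantor set) \<Rightarrow> cantor set" where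
  "OS T D = {w. (\<exists>x\<in>branches T. w = stretch x) \<or>
     (\<exists>t\<in>T. \<exists>a\<in>Fl (length t). \<exists>z\<in>D t. w = cat (stretch_list t @ a) z)}"

lemma Fl_not_const: "a \<in> Fl n \<Longrightarrow> a \<noteq> replicate (Suc n) b"
  by (cases b) (auto simp: Fl_def)

lemma Fl_length: "a \<in> Fl n \<Longrightarrow> length a = Suc n"
  by (simp add: Fl_def)

lemma stretch_eq_block_contra:
  assumes "stretch_list s' = stretch_list t @ a" "length s' = Suc (length t)" "a \<in> Fl (length t)"
  shows False
proof -
  obtain s'' b where s': "s' = s'' @ [b]" "length s'' = length t"
    using assms(2) by (metis length_Suc_conv_rev)
  have "stretch_list s'' @ replicate (Suc (length t)) b = stretch_list t @ a"
    using assms(1) s' by (simp add: stretch_list_snoc)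
  then have "a = replicate (Suc (length t)) b"
    using s'(2) by (simp add: append_eq_append_conv)
  then show False using Fl_not_const[OF assms(3)] by blast
qed

lemma restr_tri_take:
  assumes "restr w (tri (length s)) = stretch_list s" "k \<le> length s"
  shows "restr w (tri k) = stretch_list (take k s)"
proof -
  have "restr w (tri k) = take (tri k) (restr w (tri (length s)))"
    using assms(2) by (simp add: take_restr tri_mono)
  also have "\<dots> = stretch_list (take k s)"
    using assms by (simp add: stretch_list_take)
  finally show ?thesis .
qed

lemma restr_cat_piece:
  assumes "a \<in> Fl (length t)"
  shows "restr (cat (stretch_list t @ a) z) (tri (Suc (length t))) = stretch_list t @ a"
proof -
  have "length (stretch_list t @ a) = tri (Suc (length t))"
    using Fl_length[OF assms] by simp
  then show ?thesis using restr_cat_le[of "tri (Suc (length t))" "stretch_list t @ a" z] by simp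
qed

lemma restr_cat_piece_le:
  assumes "a \<in> Fl (length t)" "k \<le> length t"
  shows "restr (cat (stretch_list t @ a) z) (tri k) = stretch_list (take k t)"
proof -
  have "tri k \<le> length (stretch_list t @ a)" using assms tri_mono by fastforce
  then have "restr (cat (stretch_list t @ a) z) (tri k) = take (tri k) (stretch_list t @ a)"
    by (rule restr_cat_le)
  also have "\<dots> = take (tri k) (stretch_list t)"
    using assms tri_mono by simp
  also have "\<dots> = stretch_list (take k t)" using assms(2) by (rule stretch_list_take)
  finally show ?thesis .
qed

lemma PrTr2_take: "T \<in> PrTr2 \<Longrightarrow> s \<in> T \<Longrightarrow> take n s \<in> T"
  by (simp add: PrTr2_def)

lemma branch_restr: "x \<in> branches T \<Longrightarrow> restr x n \<in> T"
  by (simp add: branches_def)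

lemma OS_K:
  assumes T: "T \<in> PrTr2" and w: "w \<in> OS T D" and r: "restr w (tri (length s)) = stretch_list s"
  shows "s \<in> T"
proof -
  consider (br) x where "x \<in> branches T" "w = stretch x"
    | (pc) t a z where "t \<in> T" "a \<in> Fl (length t)" "z \<in> D t" "w = cat (stretch_list t @ a) z"
    using w unfolding OS_def by blast
  then show ?thesis
  proof cases
    case br
    then have "stretch_list (restr x (length s)) = stretch_list s"
      using r by (simp add: restr_stretch_tri)
    then have "s = restr x (length s)" by (metis stretch_list_inj)
    then show ?thesis using br branch_restr by metis
  next
    case pc
    show ?thesis
    proof (cases "length s \<le> length t")
      case True
      then have "stretch_list (take (length s) t) = stretch_list s"
        using r pc restr_cat_piece_le by metis
      then have "s = take (length s) t" by (metis stretch_list_inj)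
      then show ?thesis using PrTr2_take[OF T pc(1)] by metis
    next
      case False
      have "restr w (tri (Suc (length t))) = stretch_list (take (Suc (length t)) s)"
        using r False by (intro restr_tri_take) auto
      then have "stretch_list (take (Suc (length t)) s) = stretch_list t @ a"
        using pc restr_cat_piece by metis
      then show ?thesis using stretch_eq_block_contra pc(2) False by fastforce
    qed
  qed
qed

lemma OS_piece:
  assumes w: "w \<in> OS T D" and a: "a \<in> Fl (length t)"
    and r: "restr w (tri (Suc (length t))) = stretch_list t @ a"
  shows "t \<in> T \<and> (\<lambda>i. w (tri (Suc (length t)) + i)) \<in> D t"
proof -
  consider (br) x where "x \<in> branches T" "w = stretch x"
    | (pc) t' a' z where "t' \<in> T" "a' \<in> Fl (length t')" "z \<in> D t'" "w = cat (stretch_list t' @ a') z"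
    using w unfolding OS_def by blast
  then show ?thesis
  proof cases
    case br
    then have "stretch_list (restr x (Suc (length t))) = stretch_list t @ a"
      using r restr_stretch_tri[of x "Suc (length t)"] by (simp del: tri.simps)
    then show ?thesis using stretch_eq_block_contra a by fastforce
  next
    case pc
    consider "length t' = length t" | "length t' < length t" | "length t < length t'" by linarith
    then show ?thesis
    proof cases
      case 1
      then have "stretch_list t' @ a' = stretch_list t @ a"
        using r pc restr_cat_piece by metis
      then have e: "t' = t" "a' = a" using 1 by (auto simp: append_eq_append_conv dest: stretch_list_inj)
      have "length (stretch_list t' @ a') = tri (Suc (length t))"
        using Fl_length[OF pc(2)] 1 by simp
      then have "(\<lambda>i. w (tri (Suc (length t)) + i)) = z"
        using pc(4) by (auto simp: cat_def fun_eq_iff)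
      then show ?thesis using pc e by simp
    next
      case 2
      have le: "tri (Suc (length t')) \<le> tri (length t)" using 2 by (simp add: tri_mono del: tri.simps)
      have "restr w (tri (Suc (length t'))) = take (tri (Suc (length t'))) (restr w (tri (Suc (length t))))"
        using 2 by (simp add: take_restr tri_mono del: tri.simps)
      also have "\<dots> = take (tri (Suc (length t'))) (stretch_list t)"
        using r le by simp
      also have "\<dots> = stretch_list (take (Suc (length t')) t)"
        using 2 by (simp add: stretch_list_take del: tri.simps)
      finally have "stretch_list (take (Suc (length t')) t) = stretch_list t' @ a'"
        using pc restr_cat_piece by metis
      then show ?thesis using stretch_eq_block_contra pc(2) 2 by fastforce
    next
      case 3
      then have "restr w (tri (Suc (length t))) = stretch_list (take (Suc (length t)) t')"
        using pc restr_cat_piece_le[of a' t' "Suc (length t)" z] by simp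
      then have "stretch_list (take (Suc (length t)) t') = stretch_list t @ a" using r by simp
      then show ?thesis using stretch_eq_block_contra a 3 by fastforce
    qed
  qed
qed


definition determined :: "(bool list \<Rightarrow> cantor set) \<Rightarrow> bool" where
  "determined D \<longleftrightarrow> (\<forall>t. \<exists>q. \<forall>z z'. restr z q = restr z' q \<longrightarrow> (z \<in> D t \<longleftrightarrow> z' \<in> D t))"

lemma stretch_eqI:
  assumes "\<And>n i. i \<le> n \<Longrightarrow> y (tri n + i) = y (tri n)"
  shows "y = stretch (\<lambda>n. y (tri n))"
proof
  fix j
  obtain n i where j: "j = tri n + i" "i \<le> n" using block_decomp by blast
  then have "stretch (\<lambda>n. y (tri n)) j = y (tri n)"
    by (intro stretch_block) auto
  then show "y j = stretch (\<lambda>n. y (tri n)) j" using assms j by simp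
qed

lemma OS_prefix_closed:
  assumes T: "T \<in> PrTr2" and D: "determined D"
    and h: "\<And>N. \<exists>w\<in>OS T D. restr w N = restr y N"
  shows "y \<in> OS T D"
proof (cases "\<forall>n i. i \<le> n \<longrightarrow> y (tri n + i) = y (tri n)")
  case True
  define x where "x = (\<lambda>n. y (tri n))"
  have y: "y = stretch x" unfolding x_def using True by (intro stretch_eqI) auto
  have "restr x n \<in> T" for n
  proof -
    obtain w where w: "w \<in> OS T D" "restr w (tri n) = restr y (tri n)" using h by blast
    then have "restr w (tri (length (restr x n))) = stretch_list (restr x n)"
      using y by (simp add: restr_stretch_tri)
    then show ?thesis using OS_K[OF T w(1)] by blast
  qed
  then have "x \<in> branches T" by (simp add: branches_def)
  then show ?thesis using y unfolding OS_def by blast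
next
  case False
  define P where "P = (\<lambda>n. \<exists>i\<le>n. y (tri n + i) \<noteq> y (tri n))"
  have ex: "\<exists>n. P n" using False unfolding P_def by blast
  define n where "n = (LEAST n. P n)"
  have Pn: "P n" unfolding n_def using ex by (rule LeastI_ex)
  have notP: "\<And>m. m < n \<Longrightarrow> \<not> P m" unfolding n_def using not_less_Least by blast
  define x where "x = (\<lambda>n. y (tri n))"
  define t where "t = restr x n"
  define a where "a = map (\<lambda>i. y (tri n + i)) [0..<Suc n]"
  have lt: "length t = n" by (simp add: t_def)
  have "restr y (tri n) = restr (stretch x) (tri n)"
  proof (unfold restr_eq_iff, intro allI impI)
    fix j assume "j < tri n"
    obtain m i where j: "j = tri m + i" "i \<le> m" using block_decomp by blast
    have "m < n"
    proof (rule ccontr)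
      assume "\<not> m < n" then have "tri n \<le> tri m" by (simp add: tri_mono)
      then show False using j \<open>j < tri n\<close> by simp
    qed
    then have "y j = y (tri m)" using notP[of m] j unfolding P_def by auto
    moreover have "stretch x j = x m" using j by (intro stretch_block) auto
    ultimately show "y j = stretch x j" by (simp add: x_def)
  qed
  then have r1: "restr y (tri n) = stretch_list t" by (simp add: restr_stretch_tri t_def)
  have aFl: "a \<in> Fl (length t)"
  proof -
    obtain i where i: "i \<le> n" "y (tri n + i) \<noteq> y (tri n)" using Pn unfolding P_def by blast
    have "a ! i \<noteq> a ! 0" using i by (simp add: a_def nth_append del: upt_Suc)
    have "a \<noteq> replicate (Suc n) b" for b
    proof
      assume e: "a = replicate (Suc n) b"
      then have "a ! i = b" "a ! 0 = b" using i(1) by (simp_all only: nth_replicate)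
      then show False using \<open>a ! i \<noteq> a ! 0\<close> by simp
    qed
    then show ?thesis unfolding Fl_def lt by (simp add: a_def)
  qed
  have mm: "map y [tri n..<tri n + Suc n] = a"
    unfolding a_def by (rule nth_equalityI) (simp_all del: upt_Suc)
  have r2: "restr y (tri (Suc (length t))) = stretch_list t @ a"
    using r1 lt mm restr_add[of y "tri n" "Suc n"] by (simp del: upt_Suc)
  obtain q where q: "\<And>z z'. restr z q = restr z' q \<Longrightarrow> (z \<in> D t \<longleftrightarrow> z' \<in> D t)"
    using D unfolding determined_def by blast
  obtain w where w: "w \<in> OS T D" "restr w (tri (Suc (length t)) + q) = restr y (tri (Suc (length t)) + q)"
    using h by blast
  have "restr w (tri (Suc (length t))) = restr y (tri (Suc (length t)))"
    using w(2) by (metis le_add1 take_restr)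
  then have "t \<in> T \<and> (\<lambda>i. w (tri (Suc (length t)) + i)) \<in> D t"
    using OS_piece[OF w(1) aFl] r2 by simp
  moreover have "restr (\<lambda>i. w (tri (Suc (length t)) + i)) q = restr (\<lambda>i. y (tri (Suc (length t)) + i)) q"
    using w(2) by (simp add: restr_eq_iff)
  ultimately have tz: "t \<in> T" "(\<lambda>i. y (tri (Suc (length t)) + i)) \<in> D t" using q by blast+
  have "y = cat (stretch_list t @ a) (\<lambda>i. y (length (stretch_list t @ a) + i))"
    using r2 Fl_length[OF aFl] by (intro cat_restr_shift) simp
  then have "y = cat (stretch_list t @ a) (\<lambda>i. y (tri (Suc (length t)) + i))"
    using Fl_length[OF aFl] by simp
  then show ?thesis unfolding OS_def using tz aFl by blast
qed

lemma OS_closed: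
  assumes T: "T \<in> PrTr2" and D: "determined D"
  shows "closedin cantor_top (OS T D)"
proof -
  have "openin cantor_top (UNIV - OS T D)"
  proof (unfold openin_cantor_iff, intro ballI)
    fix y assume "y \<in> UNIV - OS T D"
    then obtain N where N: "\<not> (\<exists>w\<in>OS T D. restr w N = restr y N)"
      using OS_prefix_closed[OF T D] by blast
    have "Nbhd (restr y N) \<subseteq> UNIV - OS T D"
      using N by (auto simp: mem_Nbhd)
    then show "\<exists>n. Nbhd (restr y n) \<subseteq> UNIV - OS T D" by blast
  qed
  then show ?thesis by (simp add: closedin_def)
qed


lemma pruned_branch:
  assumes T: "T \<in> PrTr2" and s: "s \<in> T"
  shows "\<exists>x\<in>branches T. restr x (length s) = s"
proof -
  define ext where "ext = (\<lambda>u. SOME v. v \<in> T \<and> length u < length v \<and> take (length u) v = u)"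
  have ext: "ext u \<in> T \<and> length u < length (ext u) \<and> take (length u) (ext u) = u" if "u \<in> T" for u
  proof -
    have "\<exists>v\<in>T. length u < length v \<and> take (length u) v = u" using T that by (simp add: PrTr2_def)
    then show ?thesis unfolding ext_def by (rule someI2_bex) blast
  qed
  define f where "f = rec_nat s (\<lambda>_ u. ext u)"
  have f0: "f 0 = s" and fS: "\<And>k. f (Suc k) = ext (f k)" by (simp_all add: f_def)
  have fT: "f k \<in> T \<and> length s + k \<le> length (f k)" for k
  proof (induction k)
    case 0 then show ?case using s f0 by simp
  next
    case (Suc k) then show ?case using ext[of "f k"] fS[of k] by simp
  qed
  have fpre: "take (length (f k)) (f (k + d)) = f k" for k d
  proof (induction d)
    case 0 then show ?case by simp
  next
    case (Suc d)
    have "take (length (f (k + d))) (f (k + Suc d)) = f (k + d)"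
      using ext[of "f (k+d)"] fT[of "k+d"] fS[of "k+d"] by simp
    moreover have "length (f k) \<le> length (f (k + d))"
      using Suc by (metis length_take min.bounded_iff nle_le)
    ultimately show ?case using Suc
      by (metis min.absorb1 take_take)
  qed
  have fnth: "f k ! i = f m ! i" if "i < length (f k)" "i < length (f m)" for k m i
  proof (cases "k \<le> m")
    case True
    then obtain d where "m = k + d" by (metis le_add_diff_inverse)
    then show ?thesis using fpre[of k d] that by (metis nth_take)
  next
    case False
    then obtain d where "k = m + d" by (metis le_add_diff_inverse nat_le_linear)
    then show ?thesis using fpre[of m d] that by (metis nth_take)
  qed
  define x where "x = (\<lambda>i. f (Suc i) ! i)"
  have rx: "restr x n = take n (f n)" for n
  proof (rule nth_equalityI)
    show "length (restr x n) = length (take n (f n))" using fT[of n] by simp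
    fix i assume "i < length (restr x n)"
    then have i: "i < n" by simp
    have "x i = f n ! i" unfolding x_def using fT[of "Suc i"] fT[of n] i by (intro fnth) auto
    then show "restr x n ! i = take n (f n) ! i" using i by simp
  qed
  have "x \<in> branches T"
    unfolding branches_def using rx fT PrTr2_take[OF T] by simp
  moreover have "restr x (length s) = s"
    using rx fpre[of 0 "length s"] f0 by simp
  ultimately show ?thesis by blast
qed

lemma stretch_least_le: "(LEAST k::nat. j < (k+1)*(k+2) div 2) \<le> j"
proof (rule Least_le)
  have "Suc j \<le> tri (Suc j)" by (rule tri_ge)
  then show "j < (j+1)*(j+2) div 2" using tri_div[of "Suc j"] by (simp add: algebra_simps)
qed

lemma restr_stretch_agree:
  assumes "restr x N = restr x' N"
  shows "restr (stretch x) N = restr (stretch x') N"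
proof -
  have "stretch x j = stretch x' j" if "j < N" for j
  proof -
    have "(LEAST k::nat. j < (k+1)*(k+2) div 2) < N" using stretch_least_le[of j] that by linarith
    then show ?thesis using assms unfolding stretch_def restr_eq_iff by blast
  qed
  then show ?thesis by (simp add: restr_eq_iff)
qed

lemma OS_agree_branch:
  assumes T: "T \<in> PrTr2" and T': "T' \<in> PrTr2" and ag: "\<And>u. length u \<le> N \<Longrightarrow> (u \<in> T \<longleftrightarrow> u \<in> T')"
    and x: "x \<in> branches T"
  shows "\<exists>y'\<in>OS T' D. restr y' N = restr (stretch x) N"
proof -
  have "restr x N \<in> T'" using ag[of "restr x N"] branch_restr[OF x] by simp
  then obtain x' where x': "x' \<in> branches T'" "restr x' N = restr x N"
    using pruned_branch[OF T'] by fastforce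
  then have "stretch x' \<in> OS T' D" unfolding OS_def by blast
  moreover have "restr (stretch x') N = restr (stretch x) N" using x'(2) by (rule restr_stretch_agree)
  ultimately show ?thesis by blast
qed

lemma OS_agree:
  assumes T: "T \<in> PrTr2" and T': "T' \<in> PrTr2" and ag: "\<And>u. length u \<le> N \<Longrightarrow> (u \<in> T \<longleftrightarrow> u \<in> T')"
    and y: "y \<in> OS T D"
  shows "\<exists>y'\<in>OS T' D. restr y' N = restr y N"
proof -
  consider (br) x where "x \<in> branches T" "y = stretch x"
    | (pc) t a z where "t \<in> T" "a \<in> Fl (length t)" "z \<in> D t" "y = cat (stretch_list t @ a) z"
    using y unfolding OS_def by blast
  then show ?thesis
  proof cases
    case br then show ?thesis using OS_agree_branch[OF T T' ag] by blast
  next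
    case pc
    show ?thesis
    proof (cases "length t < N")
      case True
      then have "t \<in> T'" using ag pc(1) by simp
      then have "y \<in> OS T' D" using pc unfolding OS_def by blast
      then show ?thesis by blast
    next
      case False
      obtain x where x: "x \<in> branches T" "restr x (length t) = t" using pruned_branch[OF T pc(1)] by blast
      have "restr y (tri 0) = restr y (tri 0)" by simp
      have "restr y (tri (length t)) = stretch_list t"
        using pc restr_cat_piece_le[of a t "length t" z] by simp
      also have "\<dots> = restr (stretch x) (tri (length t))" using x(2) by (simp add: restr_stretch_tri)
      finally have "restr y N = restr (stretch x) N"
        using False tri_ge[of "length t"] by (metis le_trans not_less take_restr)
      then show ?thesis using OS_agree_branch[OF T T' ag x(1)] by simp
    qed
  qed
qed


lemma Nbhd_sub: "restr y (length s) = s \<Longrightarrow> length s \<le> N \<Longrightarrow> Nbhd (restr y N) \<subseteq> Nbhd s"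
proof
  fix x assume a: "restr y (length s) = s" "length s \<le> N" "x \<in> Nbhd (restr y N)"
  then have "\<forall>i<N. x i = y i" by (simp add: mem_Nbhd restr_eq_iff)
  then have "restr x (length s) = restr y (length s)" using a(2) by (simp add: restr_eq_iff)
  then show "x \<in> Nbhd s" using a(1) by (simp add: mem_Nbhd)
qed

lemma lebesgue_cantor:
  assumes K: "compactin cantor_top K" and U: "openin cantor_top U" and KU: "K \<subseteq> U"
  shows "\<exists>N. \<forall>y\<in>K. Nbhd (restr y N) \<subseteq> U"
proof -
  let ?A = "{s. Nbhd s \<subseteq> U}"
  have cov: "K \<subseteq> \<Union> (Nbhd ` ?A)"
  proof
    fix y assume "y \<in> K"
    then obtain n where "Nbhd (restr y n) \<subseteq> U" using openin_cantor_Nbhd[OF U] KU by blast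
    moreover have "y \<in> Nbhd (restr y n)" by (simp add: mem_Nbhd)
    ultimately show "y \<in> \<Union> (Nbhd ` ?A)" by blast
  qed
  have "\<forall>V\<in>Nbhd ` ?A. openin cantor_top V" using openin_Nbhd by blast
  then obtain \<F> where F: "finite \<F>" "\<F> \<subseteq> Nbhd ` ?A" "K \<subseteq> \<Union>\<F>"
    using K cov unfolding compactin_def by meson
  obtain C where C: "C \<subseteq> ?A" "finite C" "\<F> = Nbhd ` C"
    using finite_subset_image[OF F(1) F(2)] by blast
  obtain N where N: "length ` C \<subseteq> {..<N}" using finite_nat_bounded[of "length ` C"] C(2) by blast
  have "Nbhd (restr y N) \<subseteq> U" if y: "y \<in> K" for y
  proof -
    obtain s where s: "s \<in> C" "y \<in> Nbhd s" using F(3) C(3) y by blast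
    have "length s \<le> N" using N s(1) by auto
    then have "Nbhd (restr y N) \<subseteq> Nbhd s" using s(2) by (intro Nbhd_sub) (simp_all add: mem_Nbhd)
    then show ?thesis using C(1) s(1) by blast
  qed
  then show ?thesis by blast
qed

definition cyl_tree :: "nat \<Rightarrow> bool list set \<Rightarrow> bool list set set" where
  "cyl_tree N T0 = {T. \<forall>u. length u \<le> N \<longrightarrow> (u \<in> T \<longleftrightarrow> u \<in> T0)}"

lemma openin_cyl_tree: "openin tree_top (cyl_tree N T0)"
proof -
  let ?f = "\<lambda>u. if u \<in> T0 then {T. u \<in> T} else {T. u \<notin> T}"
  let ?L = "{u::bool list. length u \<le> N}"
  have fin: "finite ?L"
    using finite_lists_length_le[of "UNIV::bool set" N] by simp
  have e: "cyl_tree N T0 = \<Inter> (?f ` ?L)"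
    by (auto simp: cyl_tree_def split: if_splits)
  have "generate_topology_on (range (\<lambda>s. {T. s \<in> T}) \<union> range (\<lambda>s. {T. s \<notin> T})) (\<Inter> (?f ` ?L))"
  proof (rule generate_topology_on_Inter)
    show "finite (?f ` ?L)" using fin by simp
    have "[] \<in> ?L" by simp
    then show "?f ` ?L \<noteq> {}" by blast
    fix K assume "K \<in> ?f ` ?L"
    then show "generate_topology_on (range (\<lambda>s. {T. s \<in> T}) \<union> range (\<lambda>s. {T. s \<notin> T})) K"
      by (auto intro: generate_topology_on.Basis)
  qed
  then show ?thesis unfolding e tree_top_def by (simp add: openin_topology_generated_by_iff)
qed

lemma cyl_tree_self: "T0 \<in> cyl_tree N T0"
  by (simp add: cyl_tree_def)

lemma openin_PrTr_local:
  assumes "A \<subseteq> PrTr2" "\<And>T0. T0 \<in> A \<Longrightarrow> \<exists>N. cyl_tree N T0 \<inter> PrTr2 \<subseteq> A"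
  shows "openin (subtopology tree_top PrTr2) A"
proof (subst openin_subopen, intro ballI)
  fix T0 assume "T0 \<in> A"
  then obtain N where N: "cyl_tree N T0 \<inter> PrTr2 \<subseteq> A" using assms(2) by blast
  have "openin (subtopology tree_top PrTr2) (cyl_tree N T0 \<inter> PrTr2)"
    using openin_cyl_tree by (auto simp: openin_subtopology)
  moreover have "T0 \<in> cyl_tree N T0 \<inter> PrTr2" using \<open>T0 \<in> A\<close> assms(1) cyl_tree_self by blast
  ultimately show "\<exists>T. openin (subtopology tree_top PrTr2) T \<and> T0 \<in> T \<and> T \<subseteq> A" using N by blast
qed

lemma topspace_tree_top[simp]: "topspace tree_top = UNIV"
  unfolding tree_top_def by (auto simp: topology_generated_by_topspace)

lemma OS_continuous:
  assumes D: "determined D"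
  shows "continuous_map (subtopology tree_top PrTr2) vietoris (\<lambda>T. OS T D)"
proof -
  let ?S = "{{K. K \<subseteq> U} | U. openin cantor_top U} \<union> {{K. K \<inter> U \<noteq> {}} | U. openin cantor_top U}"
  have cpt: "compactin cantor_top (OS T D)" if "T \<in> PrTr2" for T
    using closedin_compact_space[OF compact_cantor OS_closed[OF that D]] .
  have gen: "continuous_map (subtopology tree_top PrTr2) (topology_generated_by ?S) (\<lambda>T. OS T D)"
  proof (rule continuous_on_generated_topo)
    have "UNIV \<in> ?S" using openin_topspace[of cantor_top] by auto
    then show "(\<lambda>T. OS T D) ` topspace (subtopology tree_top PrTr2) \<subseteq> \<Union> ?S" by blast
    fix V assume "V \<in> ?S"
    then consider (sub) U where "openin cantor_top U" "V = {K. K \<subseteq> U}"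
      | (hit) U where "openin cantor_top U" "V = {K. K \<inter> U \<noteq> {}}" by blast
    then show "openin (subtopology tree_top PrTr2) ((\<lambda>T. OS T D) -` V \<inter> topspace (subtopology tree_top PrTr2))"
    proof cases
      case sub
      show ?thesis
      proof (rule openin_PrTr_local)
        show "(\<lambda>T. OS T D) -` V \<inter> topspace (subtopology tree_top PrTr2) \<subseteq> PrTr2" by simp
        fix T0 assume T0: "T0 \<in> (\<lambda>T. OS T D) -` V \<inter> topspace (subtopology tree_top PrTr2)"
        then have T0': "T0 \<in> PrTr2" "OS T0 D \<subseteq> U" using sub by auto
        obtain N where N: "\<forall>y\<in>OS T0 D. Nbhd (restr y N) \<subseteq> U"
          using lebesgue_cantor[OF cpt[OF T0'(1)] sub(1) T0'(2)] by blast
        have "OS T D \<subseteq> U" if T: "T \<in> cyl_tree N T0 \<inter> PrTr2" for T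
        proof
          fix y assume y: "y \<in> OS T D"
          have ag: "\<And>u. length u \<le> N \<Longrightarrow> (u \<in> T \<longleftrightarrow> u \<in> T0)" using T by (simp add: cyl_tree_def)
          obtain y0 where y0: "y0 \<in> OS T0 D" "restr y0 N = restr y N"
            using OS_agree[of T T0 N y D] T T0'(1) ag y by blast
          have "y \<in> Nbhd (restr y0 N)" using y0(2) by (simp add: mem_Nbhd)
          then show "y \<in> U" using N y0(1) by blast
        qed
        then show "\<exists>N. cyl_tree N T0 \<inter> PrTr2 \<subseteq> (\<lambda>T. OS T D) -` V \<inter> topspace (subtopology tree_top PrTr2)"
          using sub by auto
      qed
    next
      case hit
      show ?thesis
      proof (rule openin_PrTr_local)
        show "(\<lambda>T. OS T D) -` V \<inter> topspace (subtopology tree_top PrTr2) \<subseteq> PrTr2" by simp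
        fix T0 assume T0: "T0 \<in> (\<lambda>T. OS T D) -` V \<inter> topspace (subtopology tree_top PrTr2)"
        then obtain y where T0': "T0 \<in> PrTr2" "y \<in> OS T0 D" "y \<in> U" using hit by auto
        obtain N where N: "Nbhd (restr y N) \<subseteq> U" using openin_cantor_Nbhd[OF hit(1) T0'(3)] by blast
        have "OS T D \<inter> U \<noteq> {}" if T: "T \<in> cyl_tree N T0 \<inter> PrTr2" for T
        proof -
          have ag: "\<And>u. length u \<le> N \<Longrightarrow> (u \<in> T0 \<longleftrightarrow> u \<in> T)" using T by (simp add: cyl_tree_def)
          obtain y' where y': "y' \<in> OS T D" "restr y' N = restr y N"
            using OS_agree[of T0 T N y D] T T0' ag by blast
          have "y' \<in> Nbhd (restr y N)" using y'(2) by (simp add: mem_Nbhd)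
          then show ?thesis using N y'(1) by blast
        qed
        then show "\<exists>N. cyl_tree N T0 \<inter> PrTr2 \<subseteq> (\<lambda>T. OS T D) -` V \<inter> topspace (subtopology tree_top PrTr2)"
          using hit by auto
      qed
    qed
  qed
  show ?thesis
    unfolding vietoris_def continuous_map_in_subtopology
    using gen cpt by auto
qed

abbreviation "M0 \<equiv> measure_pmf (pmf_of_set (UNIV :: bool set))"

lemma mu_alt: "mu = PiM UNIV (\<lambda>_. M0)" by (simp add: mu_def)

lemma prob_mu: "prob_space mu"
  unfolding mu_def by (rule prob_space_PiM) (rule prob_space_measure_pmf)

interpretation MU: prob_space mu by (rule prob_mu)

lemma space_mu[simp]: "space mu = UNIV"
  by (simp add: mu_def space_PiM)

lemma restr_eq_all: "restr z (length s) = s \<longleftrightarrow> (\<forall>i<length s. z i = s ! i)"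
proof
  assume "\<forall>i<length s. z i = s ! i" then show "restr z (length s) = s"
    by (intro nth_equalityI) auto
next
  assume a: "restr z (length s) = s"
  show "\<forall>i<length s. z i = s ! i"
  proof (intro allI impI)
    fix i assume i: "i < length s"
    show "z i = s ! i" using nth_restr[OF i, of z] a by simp
  qed
qed

lemma Nbhd_emb: "Nbhd s = prod_emb UNIV (\<lambda>_. M0) {..<length s} (Pi\<^sub>E {..<length s} (\<lambda>i. {s!i}))"
proof (intro set_eqI)
  fix z
  have "z \<in> prod_emb UNIV (\<lambda>_. M0) {..<length s} (Pi\<^sub>E {..<length s} (\<lambda>i. {s!i})) \<longleftrightarrow>
     (\<forall>i\<in>{..<length s}. z i \<in> {s!i})"
    by (simp add: prod_emb_def restrict_PiE_iff Pi_iff)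
  also have "\<dots> \<longleftrightarrow> z \<in> Nbhd s" unfolding mem_Nbhd restr_eq_all by auto
  finally show "z \<in> Nbhd s \<longleftrightarrow> z \<in> prod_emb UNIV (\<lambda>_. M0) {..<length s} (Pi\<^sub>E {..<length s} (\<lambda>i. {s!i}))" by simp
qed

lemma Nbhd_sets[simp]: "Nbhd s \<in> sets mu"
  unfolding Nbhd_emb mu_alt by (rule sets_PiM_I) auto

lemma emeasure_Nbhd: "emeasure mu (Nbhd s) = ennreal ((1/2) ^ length s)"
proof -
  have "emeasure mu (Nbhd s) = (\<Prod>i\<in>{..<length s}. emeasure M0 {s!i})"
    unfolding Nbhd_emb mu_alt by (rule emeasure_PiM_emb) (auto intro: prob_space_measure_pmf)
  also have "\<dots> = (\<Prod>i\<in>{..<length s}. ennreal (1/2))"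
    by (simp add: emeasure_pmf_single)
  also have "\<dots> = ennreal (1/2) ^ length s" by simp
  also have "\<dots> = ennreal ((1/2) ^ length s)" by (rule ennreal_power) simp
  finally show ?thesis .
qed

lemma measure_Nbhd: "measure mu (Nbhd s) = (1/2) ^ length s"
  using emeasure_Nbhd[of s] unfolding MU.emeasure_eq_measure by (subst (asm) ennreal_inj) simp_all

definition Cyl :: "nat \<Rightarrow> bool list set \<Rightarrow> cantor set" where
  "Cyl L E = {z. restr z L \<in> E}"

lemma Cyl_Union: "Cyl L E = (\<Union>e\<in>E \<inter> {e. length e = L}. Nbhd e)"
  by (auto simp: Cyl_def mem_Nbhd)

lemma finite_len: "finite {e :: bool list. length e = L}"
  using finite_lists_length_eq[of "UNIV::bool set" L] by simp

lemma Cyl_sets[simp]: "Cyl L E \<in> sets mu"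
  unfolding Cyl_Union using finite_len by (intro sets.finite_UN) auto

lemma measure_Cyl:
  assumes "E \<subseteq> {e. length e = L}"
  shows "measure mu (Cyl L E) = card E * (1/2) ^ L"
proof -
  have fin: "finite E" using finite_subset[OF assms finite_len] .
  have e: "E \<inter> {e. length e = L} = E" using assms by blast
  have "measure mu (Cyl L E) = (\<Sum>e\<in>E. measure mu (Nbhd e))"
    unfolding Cyl_Union e
  proof (rule MU.finite_measure_finite_Union)
    show "disjoint_family_on Nbhd E"
    proof (unfold disjoint_family_on_def, intro ballI impI)
      fix m n assume mn: "m \<in> E" "n \<in> E" "m \<noteq> n"
      then have "length m = L" "length n = L" using assms by auto
      then show "Nbhd m \<inter> Nbhd n = {}" using mn(3) by (auto simp: mem_Nbhd)
    qed
  qed (auto simp: fin)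
  also have "\<dots> = card E * (1/2) ^ L"
    using assms by (simp add: measure_Nbhd subset_iff)
  finally show ?thesis .
qed


lemma OS_sets:
  assumes T: "T \<in> PrTr2" and D: "determined D"
  shows "OS T D \<in> sets mu"
proof -
  have e: "OS T D = (\<Inter>N. Cyl N ((\<lambda>w. restr w N) ` OS T D))"
  proof (intro set_eqI iffI)
    fix y assume "y \<in> (\<Inter>N. Cyl N ((\<lambda>w. restr w N) ` OS T D))"
    have "\<exists>w\<in>OS T D. restr w N = restr y N" for N
    proof -
      have "y \<in> Cyl N ((\<lambda>w. restr w N) ` OS T D)" using \<open>y \<in> _\<close> by blast
      then have "restr y N \<in> (\<lambda>w. restr w N) ` OS T D" by (simp add: Cyl_def)
      then obtain w where w: "w \<in> OS T D" "restr y N = restr w N" by (rule imageE)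
      show ?thesis using w by (intro bexI[of _ w]) simp_all
    qed
    then show "y \<in> OS T D" by (rule OS_prefix_closed[OF T D])
  next
    fix y assume y: "y \<in> OS T D"
    show "y \<in> (\<Inter>N. Cyl N ((\<lambda>w. restr w N) ` OS T D))"
    proof (intro INT_I)
      fix N show "y \<in> Cyl N ((\<lambda>w. restr w N) ` OS T D)" unfolding Cyl_def using y by (intro CollectI imageI)
    qed
  qed
  have "(\<Inter>N. Cyl N ((\<lambda>w. restr w N) ` OS T D)) \<in> sets mu"
    by (rule sets.countable_INT) auto
  then show ?thesis by (subst e)
qed

definition phi :: "cantor set \<Rightarrow> bool list \<Rightarrow> real" where
  "phi A u = measure mu (A \<inter> Nbhd u) * 2 ^ length u"

lemma ratio_phi: "A \<in> sets mu \<Longrightarrow> ratio A z n = phi A (restr z n)"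
proof -
  assume A: "A \<in> sets mu"
  have "ratio A z n = measure mu (A \<inter> Nbhd (restr z n)) / (1/2) ^ n"
  proof -
    have s: "A \<inter> Nbhd (restr z n) \<in> sets mu" using A Nbhd_sets by (rule sets.Int)
    show ?thesis unfolding ratio_def measure_completion[OF s] measure_completion[OF Nbhd_sets] measure_Nbhd by simp
  qed
  also have "\<dots> = phi A (restr z n)"
    unfolding phi_def by (simp add: power_one_over)
  finally show ?thesis .
qed


lemma Nbhd_split: "Nbhd u = Nbhd (u @ [False]) \<union> Nbhd (u @ [True])"
proof (intro set_eqI iffI)
  fix z assume "z \<in> Nbhd u"
  then have "restr z (length (u @ [z (length u)])) = u @ [z (length u)]"
    by (simp add: mem_Nbhd restr_Suc)
  then show "z \<in> Nbhd (u @ [False]) \<union> Nbhd (u @ [True])"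
    by (cases "z (length u)") (auto simp: mem_Nbhd)
next
  fix z assume "z \<in> Nbhd (u @ [False]) \<union> Nbhd (u @ [True])"
  then show "z \<in> Nbhd u" by (auto simp: mem_Nbhd restr_Suc)
qed

lemma phi_split:
  assumes "A \<in> sets mu"
  shows "phi A u = (phi A (u @ [False]) + phi A (u @ [True])) / 2"
proof -
  have d: "(A \<inter> Nbhd (u @ [False])) \<inter> (A \<inter> Nbhd (u @ [True])) = {}"
    by (auto simp: mem_Nbhd restr_Suc)
  have "measure mu (A \<inter> Nbhd u) = measure mu ((A \<inter> Nbhd (u @ [False])) \<union> (A \<inter> Nbhd (u @ [True])))"
    using Nbhd_split[of u] by (simp add: Int_Un_distrib)
  also have "\<dots> = measure mu (A \<inter> Nbhd (u @ [False])) + measure mu (A \<inter> Nbhd (u @ [True]))"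
    using assms d by (intro MU.finite_measure_Union) auto
  finally show ?thesis unfolding phi_def by (simp add: algebra_simps)
qed

lemma phi_bounds: "0 \<le> phi A u" "phi A u \<le> 1"
proof -
  show "0 \<le> phi A u" by (simp add: phi_def)
  have "measure mu (A \<inter> Nbhd u) \<le> measure mu (Nbhd u)"
    by (rule MU.finite_measure_mono) auto
  then have "phi A u \<le> (1/2) ^ length u * 2 ^ length u"
    unfolding phi_def measure_Nbhd by (intro mult_right_mono) auto
  then show "phi A u \<le> 1" by (simp add: power_one_over)
qed

lemma phi_empty: "A \<inter> Nbhd u = {} \<Longrightarrow> phi A u = 0"
  by (simp add: phi_def)

lemma cat_image_Cyl:
  assumes "E \<subseteq> {e. length e = q}"
  shows "cat u ` Cyl q E = Cyl (length u + q) ((@) u ` E)"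
proof (intro set_eqI iffI)
  fix w assume "w \<in> cat u ` Cyl q E"
  then show "w \<in> Cyl (length u + q) ((@) u ` E)" by (auto simp: Cyl_def restr_cat)
next
  fix w assume "w \<in> Cyl (length u + q) ((@) u ` E)"
  then obtain e where e: "e \<in> E" "restr w (length u + q) = u @ e" by (auto simp: Cyl_def)
  then have le: "length e = q" using assms by auto
  have "restr w (length u) = take (length u) (restr w (length u + q))" by (simp add: take_restr)
  then have "restr w (length u) = u" using e(2) by simp
  then have w: "w = cat u (\<lambda>i. w (length u + i))" by (rule cat_restr_shift)
  have "u @ restr (\<lambda>i. w (length u + i)) q = u @ e"
    using e(2) by (subst (asm) w) (simp add: restr_cat)
  then have "restr (\<lambda>i. w (length u + i)) q = e" by simp
  then show "w \<in> cat u ` Cyl q E" using e(1) w by (auto simp: Cyl_def)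
qed

lemma phi_Cyl:
  assumes "E \<subseteq> {e. length e = q}"
  shows "phi (Cyl (length u + q) ((@) u ` E)) u = card E * (1/2) ^ q"
proof -
  have sub: "Cyl (length u + q) ((@) u ` E) \<subseteq> Nbhd u"
    by (auto simp: Cyl_def mem_Nbhd) (metis append_eq_conv_conj length_restr le_add1 take_restr)
  have "(@) u ` E \<subseteq> {e. length e = length u + q}" using assms by auto
  then have "measure mu (Cyl (length u + q) ((@) u ` E)) = card ((@) u ` E) * (1/2) ^ (length u + q)"
    by (rule measure_Cyl)
  also have "card ((@) u ` E) = card E" by (rule card_image) (simp add: inj_on_def)
  finally show ?thesis
    using sub by (simp add: phi_def Int_absorb2 power_add power_one_over field_simps)
qed


lemma osc_zero_iff:
  fixes X :: "nat \<Rightarrow> real"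
  assumes b: "\<And>n. 0 \<le> X n" "\<And>n. X n \<le> 1"
  shows "limsup (\<lambda>n. ereal (X n)) - liminf (\<lambda>n. ereal (X n)) = 0 \<longleftrightarrow> convergent X"
proof
  assume "convergent X"
  then obtain L where L: "X \<longlonglongrightarrow> L" by (auto simp: convergent_def)
  then have "(\<lambda>n. ereal (X n)) \<longlonglongrightarrow> ereal L" by simp
  then have "limsup (\<lambda>n. ereal (X n)) = ereal L" "liminf (\<lambda>n. ereal (X n)) = ereal L"
    by (simp_all add: lim_imp_Limsup lim_imp_Liminf)
  then show "limsup (\<lambda>n. ereal (X n)) - liminf (\<lambda>n. ereal (X n)) = 0" by simp
next
  assume d: "limsup (\<lambda>n. ereal (X n)) - liminf (\<lambda>n. ereal (X n)) = 0"
  have lo: "0 \<le> liminf (\<lambda>n. ereal (X n))" using b(1) by (intro Liminf_bounded) simp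
  have hi: "limsup (\<lambda>n. ereal (X n)) \<le> 1" using b(2) by (intro Limsup_bounded) simp
  have le: "liminf (\<lambda>n. ereal (X n)) \<le> limsup (\<lambda>n. ereal (X n))" by (rule Liminf_le_Limsup) simp
  obtain a where a: "limsup (\<lambda>n. ereal (X n)) = ereal a"
    using lo le hi by (cases "limsup (\<lambda>n. ereal (X n))") auto
  obtain c where c: "liminf (\<lambda>n. ereal (X n)) = ereal c"
    using lo le hi by (cases "liminf (\<lambda>n. ereal (X n))") auto
  have "a = c" using d a c by simp
  then have "X \<longlonglongrightarrow> a" using a c by (intro limsup_le_liminf_real) simp_all
  then show "convergent X" by (auto simp: convergent_def)
qed

definition nc :: "bool list \<Rightarrow> bool" where "nc b \<longleftrightarrow> (\<exists>i<length b. b ! i \<noteq> b ! 0)"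

lemma Fl_nc: "a \<in> Fl n \<longleftrightarrow> length a = Suc n \<and> nc a"
proof
  assume a: "a \<in> Fl n"
  then have l: "length a = Suc n" by (simp add: Fl_def)
  have "nc a"
  proof (rule ccontr)
    assume "\<not> nc a"
    then have "\<forall>i<length a. a ! i = a ! 0" by (simp add: nc_def)
    then have h: "\<And>i. i < length a \<Longrightarrow> a ! i = a ! 0" by blast
    have "a = replicate (Suc n) (a ! 0)"
    proof (rule nth_equalityI)
      show "length a = length (replicate (Suc n) (a ! 0))" using l by simp
      fix i assume i: "i < length a"
      then have "replicate (Suc n) (a ! 0) ! i = a ! 0" using l by (simp only: nth_replicate)
      then show "a ! i = replicate (Suc n) (a ! 0) ! i" using h[OF i] by simp
    qed
    with Fl_not_const[OF a, of "a ! 0"] show False by (rule notE)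
  qed
  then show "length a = Suc n \<and> nc a" using l by simp
next
  assume a: "length a = Suc n \<and> nc a"
  then obtain i where i: "i < Suc n" "a ! i \<noteq> a ! 0" by (auto simp: nc_def)
  have "a \<noteq> replicate (Suc n) b" for b
  proof
    assume e: "a = replicate (Suc n) b"
    have "a ! i = b" "a ! 0 = b" using i(1) unfolding e by (simp_all only: nth_replicate zero_less_Suc)
    then show False using i(2) by simp
  qed
  then show "a \<in> Fl n" using a by (simp add: Fl_def)
qed


lemma nc_snoc: "nc b \<Longrightarrow> nc (b @ [x])"
proof -
  assume "nc b"
  then obtain i where i: "i < length b" "b ! i \<noteq> b ! 0" by (auto simp: nc_def)
  have "0 < length b" using i(1) by linarith
  then have "(b @ [x]) ! i = b ! i" "(b @ [x]) ! 0 = b ! 0" using i(1) by (simp_all only: nth_append if_True)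
  then show "nc (b @ [x])" unfolding nc_def using i by (intro exI[of _ i]) simp
qed

lemma nc_rep: "0 < k \<Longrightarrow> nc (replicate k b @ [\<not> b])"
  by (auto simp: nc_def nth_append intro!: exI[of _ k])


locale constr =
  fixes q :: "bool list \<Rightarrow> nat" and E :: "bool list \<Rightarrow> bool list set"
  assumes HE: "\<And>t. E t \<subseteq> {e. length e = q t}"
begin

definition DD where "DD t = Cyl (q t) (E t)"
definition m where "m t = card (E t) * (1/2) ^ q t"

lemma det: "determined DD"
  unfolding determined_def DD_def Cyl_def
proof
  fix t show "\<exists>qa. \<forall>z z'. restr z qa = restr z' qa \<longrightarrow> (z \<in> {z. restr z (q t) \<in> E t}) = (z' \<in> {z. restr z (q t) \<in> E t})"
    by (rule exI[of _ "q t"]) simp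
qed

lemma m_bounds: "0 \<le> m t" "m t \<le> 1"
proof -
  show "0 \<le> m t" by (simp add: m_def)
  have "card (E t) \<le> card {e::bool list. length e = q t}"
    using HE finite_len by (rule card_mono[rotated])
  also have "\<dots> = 2 ^ q t" using card_lists_length_eq[of "UNIV::bool set" "q t"] by simp
  finally have "real (card (E t)) \<le> 2 ^ q t" by (simp add: of_nat_le_iff[symmetric])
  then show "m t \<le> 1" by (simp add: m_def power_one_over field_simps)
qed

lemma phi_piece:
  assumes T: "T \<in> PrTr2" and t: "t \<in> T" and a: "a \<in> Fl (length t)"
  shows "phi (OS T DD) (stretch_list t @ a) = m t"
proof -
  let ?u = "stretch_list t @ a"
  have lu: "length ?u = tri (Suc (length t))" using Fl_length[OF a] by simp
  have e: "OS T DD \<inter> Nbhd ?u = cat ?u ` DD t"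
  proof (intro set_eqI iffI)
    fix w assume w: "w \<in> OS T DD \<inter> Nbhd ?u"
    then have r: "restr w (tri (Suc (length t))) = ?u" using lu by (simp add: mem_Nbhd)
    have "(\<lambda>i. w (tri (Suc (length t)) + i)) \<in> DD t" using OS_piece[of w T DD a t] w a r by blast
    moreover have "w = cat ?u (\<lambda>i. w (length ?u + i))" using w by (intro cat_restr_shift) (simp add: mem_Nbhd)
    ultimately show "w \<in> cat ?u ` DD t" using lu by auto
  next
    fix w assume "w \<in> cat ?u ` DD t"
    then obtain z where z: "z \<in> DD t" "w = cat ?u z" by blast
    then have "w \<in> OS T DD" unfolding OS_def using t a by blast
    moreover have "w \<in> Nbhd ?u" using z restr_cat[of ?u z 0] by (simp add: mem_Nbhd restr_def)
    ultimately show "w \<in> OS T DD \<inter> Nbhd ?u" by blast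
  qed
  have c: "cat ?u ` DD t = Cyl (length ?u + q t) ((@) ?u ` E t)"
    unfolding DD_def by (rule cat_image_Cyl[OF HE])
  have sub: "Cyl (length ?u + q t) ((@) ?u ` E t) \<subseteq> Nbhd ?u" using e c by blast
  have "phi (OS T DD) ?u = phi (Cyl (length ?u + q t) ((@) ?u ` E t)) ?u"
    unfolding phi_def using e c sub by (simp add: Int_absorb2)
  also have "\<dots> = m t" unfolding m_def by (rule phi_Cyl[OF HE])
  finally show ?thesis .
qed


lemma abs01: "0 \<le> (a::real) \<Longrightarrow> a \<le> 1 \<Longrightarrow> 0 \<le> b \<Longrightarrow> b \<le> 1 \<Longrightarrow> \<bar>a - b\<bar> \<le> 1"
  by arith

lemma conv_bound:
  fixes h a b c :: real
  assumes "0 \<le> h" "h \<le> 1"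
  shows "\<bar>(1 - h) * a + h * b - c\<bar> \<le> \<bar>a - c\<bar> + \<bar>b - c\<bar>"
proof -
  have e: "(1 - h) * a + h * b - c = (1 - h) * (a - c) + h * (b - c)" by (simp add: algebra_simps)
  have "\<bar>(1 - h) * (a - c)\<bar> \<le> \<bar>a - c\<bar>"
    using assms by (simp add: abs_mult mult_left_le_one_le)
  moreover have "\<bar>h * (b - c)\<bar> \<le> \<bar>b - c\<bar>"
    using assms by (simp add: abs_mult mult_left_le_one_le)
  ultimately show ?thesis unfolding e using abs_triangle_ineq[of "(1 - h) * (a - c)" "h * (b - c)"] by linarith
qed

lemma arith_avg:
  fixes X Y0 Y1 h mm P0 P1 :: real
  shows "X = (Y0 + Y1) / 2 \<Longrightarrow> Y0 = (1 - h) * mm + h * P0 \<Longrightarrow> Y1 = (1 - h) * mm + h * P1 \<Longrightarrow>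
    X - mm = h * ((P0 + P1) / 2 - mm)"
  by (simp add: algebra_simps)

lemma G_sets: "T \<in> PrTr2 \<Longrightarrow> OS T DD \<in> sets mu"
  by (rule OS_sets[OF _ det])

lemma phi_other: "T \<in> PrTr2 \<Longrightarrow> phi (OS T DD) u = (phi (OS T DD) (u @ [b]) + phi (OS T DD) (u @ [\<not> b])) / 2"
  using phi_split[OF G_sets, of T u] by (cases b) simp_all

lemma phi_nc:
  assumes T: "T \<in> PrTr2" and t: "t \<in> T"
  shows "nc b \<Longrightarrow> length b \<le> Suc (length t) \<Longrightarrow> phi (OS T DD) (stretch_list t @ b) = m t"
proof (induction "Suc (length t) - length b" arbitrary: b)
  case 0
  then have "b \<in> Fl (length t)" by (simp add: Fl_nc)
  then show ?case by (rule phi_piece[OF T t])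
next
  case (Suc d)
  have "phi (OS T DD) (stretch_list t @ b) =
     (phi (OS T DD) ((stretch_list t @ b) @ [False]) + phi (OS T DD) ((stretch_list t @ b) @ [True])) / 2"
    by (rule phi_split[OF G_sets[OF T]])
  moreover have "phi (OS T DD) ((stretch_list t @ b) @ [x]) = m t" for x
  proof -
    have "phi (OS T DD) (stretch_list t @ (b @ [x])) = m t"
      using Suc.prems Suc.hyps by (intro Suc.hyps(1)) (simp_all add: nc_snoc)
    then show ?thesis by simp
  qed
  ultimately show ?case by simp
qed

lemma phi_zero:
  assumes T: "T \<in> PrTr2" and t: "t \<notin> T"
  shows "phi (OS T DD) (stretch_list t) = 0"
proof (rule phi_empty, rule ccontr)
  assume "OS T DD \<inter> Nbhd (stretch_list t) \<noteq> {}"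
  then obtain w where w: "w \<in> OS T DD" "w \<in> Nbhd (stretch_list t)" by blast
  then have "restr w (tri (length t)) = stretch_list t" by (simp add: mem_Nbhd)
  then have "t \<in> T" by (rule OS_K[OF T w(1)])
  then show False using t by simp
qed

lemma phi_F1:
  assumes T: "T \<in> PrTr2" and t: "t \<in> T"
  shows "1 \<le> k \<Longrightarrow> k \<le> Suc (length t) \<Longrightarrow>
    phi (OS T DD) (stretch_list t @ replicate k b) =
      (1 - (1/2) ^ (Suc (length t) - k)) * m t + (1/2) ^ (Suc (length t) - k) * phi (OS T DD) (stretch_list (t @ [b]))"
proof (induction "Suc (length t) - k" arbitrary: k)
  case 0
  then have "k = Suc (length t)" by simp
  then show ?case by (simp add: stretch_list_snoc)
next
  case (Suc d)
  let ?G = "OS T DD"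
  let ?p = "phi ?G (stretch_list (t @ [b]))"
  have k: "1 \<le> k" "k \<le> length t" using Suc by auto
  have "phi ?G (stretch_list t @ replicate k b) =
     (phi ?G ((stretch_list t @ replicate k b) @ [b]) + phi ?G ((stretch_list t @ replicate k b) @ [\<not> b])) / 2"
    by (rule phi_other[OF T])
  also have "phi ?G ((stretch_list t @ replicate k b) @ [b]) = (1 - (1/2) ^ d) * m t + (1/2) ^ d * ?p"
  proof -
    have e: "(stretch_list t @ replicate k b) @ [b] = stretch_list t @ replicate (Suc k) b"
      by (simp add: replicate_append_same)
    have "d = Suc (length t) - Suc k" using Suc.hyps(2) by simp
    then have ih: "phi ?G (stretch_list t @ replicate (Suc k) b) = (1 - (1/2) ^ d) * m t + (1/2) ^ d * ?p"
      using Suc.hyps(1)[of "Suc k"] k by simp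
    show ?thesis unfolding e by (rule ih)
  qed
  also have "phi ?G ((stretch_list t @ replicate k b) @ [\<not> b]) = m t"
  proof -
    have "phi ?G (stretch_list t @ (replicate k b @ [\<not> b])) = m t"
      using k by (intro phi_nc[OF T t] nc_rep) simp_all
    then show ?thesis by simp
  qed
  finally have X: "phi ?G (stretch_list t @ replicate k b) = ((1 - (1/2) ^ d) * m t + (1/2) ^ d * ?p + m t) / 2" .
  have e2: "Suc (length t) - k = Suc d" using Suc.hyps(2) by simp
  show ?case unfolding e2 using X by (simp add: field_simps)
qed

lemma phi_A_bound:
  assumes T: "T \<in> PrTr2" and t: "t \<in> T"
  shows "\<bar>phi (OS T DD) (stretch_list t) - m t\<bar> \<le> (1/2) ^ length t"
proof -
  let ?G = "OS T DD"
  let ?h = "(1/2::real) ^ length t"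
  have one: "phi ?G (stretch_list t @ [b]) = (1 - ?h) * m t + ?h * phi ?G (stretch_list (t @ [b]))" for b
    using phi_F1[OF T t, of 1 b] by simp
  have "phi ?G (stretch_list t) = (phi ?G (stretch_list t @ [False]) + phi ?G (stretch_list t @ [True])) / 2"
    by (rule phi_split[OF G_sets[OF T]])
  then have e: "phi ?G (stretch_list t) - m t =
      ?h * ((phi ?G (stretch_list (t @ [False])) + phi ?G (stretch_list (t @ [True]))) / 2 - m t)"
    using one[of False] one[of True] by (intro arith_avg) simp_all
  have "\<bar>(phi ?G (stretch_list (t @ [False])) + phi ?G (stretch_list (t @ [True]))) / 2 - m t\<bar> \<le> 1"
  proof -
    have "0 \<le> (phi ?G (stretch_list (t @ [False])) + phi ?G (stretch_list (t @ [True]))) / 2"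
         "(phi ?G (stretch_list (t @ [False])) + phi ?G (stretch_list (t @ [True]))) / 2 \<le> 1"
      using phi_bounds[of ?G "stretch_list (t @ [False])"] phi_bounds[of ?G "stretch_list (t @ [True])"] by simp_all
    then show ?thesis using m_bounds[of t] abs01 by blast
  qed
  then have "\<bar>?h * ((phi ?G (stretch_list (t @ [False])) + phi ?G (stretch_list (t @ [True]))) / 2 - m t)\<bar> \<le> ?h * 1"
    by (simp add: abs_mult mult_left_mono)
  then show ?thesis using e by simp
qed


lemma ratio_block:
  assumes T: "T \<in> PrTr2" and x: "x \<in> branches T" and k: "k \<le> n"
  shows "\<bar>ratio (OS T DD) (stretch x) (tri n + k) - c0\<bar> \<le>
    \<bar>m (restr x n) - c0\<bar> + \<bar>m (restr x (Suc n)) - c0\<bar> + (1/2) ^ n"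
proof -
  let ?G = "OS T DD"
  let ?t = "restr x n"
  have t: "?t \<in> T" using x by (rule branch_restr)
  have t1: "restr x (Suc n) \<in> T" using x by (rule branch_restr)
  have snoc: "?t @ [x n] = restr x (Suc n)" by (simp add: restr_Suc)
  have r: "ratio ?G (stretch x) (tri n + k) = phi ?G (stretch_list ?t @ replicate k (x n))"
    using ratio_phi[OF G_sets[OF T]] restr_stretch_block[of k n x] k by simp
  have A1: "\<bar>phi ?G (stretch_list (restr x (Suc n))) - m (restr x (Suc n))\<bar> \<le> (1/2) ^ n"
  proof -
    have "\<bar>phi ?G (stretch_list (restr x (Suc n))) - m (restr x (Suc n))\<bar> \<le> (1/2) ^ Suc n"
      using phi_A_bound[OF T t1] by simp
    also have "(1/2::real) ^ Suc n \<le> (1/2) ^ n" by (simp add: power_decreasing)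
    finally show ?thesis .
  qed
  show ?thesis
  proof (cases "k = 0")
    case True
    have "\<bar>phi ?G (stretch_list ?t) - m ?t\<bar> \<le> (1/2) ^ n" using phi_A_bound[OF T t] by simp
    then show ?thesis using r True by (simp add: abs_le_iff; linarith)
  next
    case False
    let ?h = "(1/2::real) ^ (Suc n - k)"
    have v: "phi ?G (stretch_list ?t @ replicate k (x n)) =
        (1 - ?h) * m ?t + ?h * phi ?G (stretch_list (restr x (Suc n)))"
      using phi_F1[OF T t, of k "x n"] False k snoc by simp
    have h: "0 \<le> ?h" "?h \<le> 1" by (simp_all add: power_le_one)
    have "\<bar>(1 - ?h) * m ?t + ?h * phi ?G (stretch_list (restr x (Suc n))) - c0\<bar> \<le>
        \<bar>m ?t - c0\<bar> + \<bar>phi ?G (stretch_list (restr x (Suc n))) - c0\<bar>"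
      using h by (rule conv_bound)
    then show ?thesis using r v A1 by (simp add: abs_le_iff; linarith)
  qed
qed


lemma half_pow_small: "0 < r \<Longrightarrow> \<exists>n0. \<forall>n\<ge>n0. (1/2::real) ^ n < r"
proof -
  assume r: "0 < r"
  have "(\<lambda>n. (1/2::real) ^ n) \<longlonglongrightarrow> 0" by (rule LIMSEQ_realpow_zero) simp_all
  from LIMSEQ_D[OF this r] obtain n0 where "\<forall>n\<ge>n0. norm ((1/2::real) ^ n - 0) < r" by blast
  then show ?thesis by auto
qed

lemma block_ge:
  assumes "tri n0 \<le> tri n + k" "k \<le> n"
  shows "n0 \<le> n"
proof (rule ccontr)
  assume "\<not> n0 \<le> n"
  then have "tri (Suc n) \<le> tri n0" by (simp add: tri_mono del: tri.simps)
  then show False using assms by simp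
qed

lemma ratio_conv:
  assumes T: "T \<in> PrTr2" and x: "x \<in> branches T" and lim: "(\<lambda>n. m (restr x n)) \<longlonglongrightarrow> c0"
  shows "ratio (OS T DD) (stretch x) \<longlonglongrightarrow> c0"
proof (rule LIMSEQ_I)
  fix r :: real assume r: "0 < r"
  then have r3: "0 < r / 3" by simp
  from LIMSEQ_D[OF lim r3] obtain n1 where n1: "\<forall>n\<ge>n1. norm (m (restr x n) - c0) < r / 3" by blast
  from half_pow_small[OF r3] obtain n2 where n2: "\<forall>n\<ge>n2. (1/2::real) ^ n < r / 3" by blast
  let ?n0 = "max n1 n2"
  have "norm (ratio (OS T DD) (stretch x) N - c0) < r" if N: "tri ?n0 \<le> N" for N
  proof -
    obtain n k where nk: "N = tri n + k" "k \<le> n" using block_decomp by blast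
    then have "?n0 \<le> n" using N block_ge by blast
    then have a: "\<bar>m (restr x n) - c0\<bar> < r / 3" "\<bar>m (restr x (Suc n)) - c0\<bar> < r / 3" "(1/2::real) ^ n < r / 3"
      using n1 n2 by auto
    have "\<bar>ratio (OS T DD) (stretch x) N - c0\<bar> \<le> \<bar>m (restr x n) - c0\<bar> + \<bar>m (restr x (Suc n)) - c0\<bar> + (1/2) ^ n"
      unfolding nk(1) by (rule ratio_block[OF T x nk(2)])
    then show ?thesis using a by simp
  qed
  then show "\<exists>no. \<forall>N\<ge>no. norm (ratio (OS T DD) (stretch x) N - c0) < r" by blast
qed

lemma ratio_tri:
  assumes T: "T \<in> PrTr2"
  shows "ratio (OS T DD) (stretch x) (tri n) = phi (OS T DD) (stretch_list (restr x n))"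
  using ratio_phi[OF G_sets[OF T]] restr_stretch_tri[of x n] by simp

lemma ratio_nonconv:
  assumes T: "T \<in> PrTr2" and x: "x \<in> branches T" and d: "0 < \<delta>"
    and osc: "\<And>n0. \<exists>n\<ge>n0. \<delta> \<le> \<bar>m (restr x n) - m (restr x (Suc n))\<bar>"
  shows "\<not> convergent (ratio (OS T DD) (stretch x))"
proof
  assume "convergent (ratio (OS T DD) (stretch x))"
  then obtain L where L: "ratio (OS T DD) (stretch x) \<longlonglongrightarrow> L" by (auto simp: convergent_def)
  have d4: "0 < \<delta> / 4" using d by simp
  from LIMSEQ_D[OF L d4] obtain N0 where N0: "\<forall>N\<ge>N0. norm (ratio (OS T DD) (stretch x) N - L) < \<delta> / 4" by blast
  from half_pow_small[OF d4] obtain n2 where n2: "\<forall>n\<ge>n2. (1/2::real) ^ n < \<delta> / 4" by blast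
  obtain n where n: "max N0 n2 \<le> n" "\<delta> \<le> \<bar>m (restr x n) - m (restr x (Suc n))\<bar>" using osc by blast
  have tn: "N0 \<le> tri n" "N0 \<le> tri (Suc n)" using n(1) tri_ge[of n] tri_ge[of "Suc n"] by linarith+
  have a1: "\<bar>ratio (OS T DD) (stretch x) (tri n) - L\<bar> < \<delta> / 4" using N0 tn by simp
  have a2: "\<bar>ratio (OS T DD) (stretch x) (tri (Suc n)) - L\<bar> < \<delta> / 4" using N0 tn by (simp del: tri.simps)
  have b1: "\<bar>ratio (OS T DD) (stretch x) (tri n) - m (restr x n)\<bar> \<le> (1/2) ^ n"
    unfolding ratio_tri[OF T] using phi_A_bound[OF T branch_restr[OF x, of n]] by simp
  have "\<bar>ratio (OS T DD) (stretch x) (tri (Suc n)) - m (restr x (Suc n))\<bar> \<le> (1/2) ^ Suc n"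
    unfolding ratio_tri[OF T] using phi_A_bound[OF T branch_restr[OF x, of "Suc n"]] by simp
  also have "(1/2::real) ^ Suc n \<le> (1/2) ^ n" by (simp add: power_decreasing)
  finally have b2: "\<bar>ratio (OS T DD) (stretch x) (tri (Suc n)) - m (restr x (Suc n))\<bar> \<le> (1/2) ^ n" .
  have "(1/2::real) ^ n < \<delta> / 4" using n2 n(1) by simp
  then show False using a1 a2 b1 b2 n(2) by (simp add: abs_le_iff abs_less_iff; linarith)
qed

end

definition ones :: "bool list \<Rightarrow> nat" where "ones t = length (filter id t)"
definition KK :: "bool list \<Rightarrow> nat" where "KK t = 2 ^ (ones t + 2)"
definition cy :: "(cantor \<Rightarrow> real) \<Rightarrow> bool list \<Rightarrow> real" where "cy c t = c (cat t (\<lambda>_. True))"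
definition idx :: "(cantor \<Rightarrow> real) \<Rightarrow> bool list \<Rightarrow> nat" where
  "idx c t = min (KK t - 1) (nat \<lfloor>cy c t * real (KK t)\<rfloor>)"
definition Mv :: "(cantor \<Rightarrow> real) \<Rightarrow> bool list \<Rightarrow> nat" where
  "Mv c t = 4 * idx c t + (if even (length t) then 1 else 3)"
definition qq :: "bool list \<Rightarrow> nat" where "qq t = ones t + 4"
definition EE :: "(cantor \<Rightarrow> real) \<Rightarrow> bool list \<Rightarrow> bool list set" where
  "EE c t = (SOME E. E \<subseteq> {e. length e = qq t} \<and> card E = Mv c t)"
definition mval :: "(cantor \<Rightarrow> real) \<Rightarrow> bool list \<Rightarrow> real" where
  "mval c t = real (Mv c t) / real (4 * KK t)"

lemma KK_pos: "4 \<le> KK t"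
proof -
  have "(2::nat) ^ 2 \<le> 2 ^ (ones t + 2)" by (rule power_increasing) simp_all
  then show ?thesis by (simp add: KK_def)
qed

lemma qq_KK: "(2::nat) ^ qq t = 4 * KK t"
  by (simp add: qq_def KK_def power_add)

lemma Mv_ge1: "1 \<le> Mv c t" by (simp add: Mv_def)

lemma Mv_lt: "Mv c t < 2 ^ qq t"
proof -
  have "idx c t \<le> KK t - 1" by (simp add: idx_def)
  then have "Mv c t \<le> 4 * (KK t - 1) + 3" by (simp add: Mv_def)
  also have "\<dots> < 4 * KK t" using KK_pos[of t] by simp
  finally show ?thesis by (simp add: qq_KK)
qed

lemma EE_props: "EE c t \<subseteq> {e. length e = qq t} \<and> card (EE c t) = Mv c t"
proof -
  have "card {e::bool list. length e = qq t} = 2 ^ qq t"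
    using card_lists_length_eq[of "UNIV::bool set" "qq t"] by simp
  then have "Mv c t \<le> card {e::bool list. length e = qq t}" using Mv_lt[of c t] by simp
  then obtain E where "E \<subseteq> {e::bool list. length e = qq t}" "card E = Mv c t"
    by (rule obtain_subset_with_card_n)
  then have "\<exists>E. E \<subseteq> {e::bool list. length e = qq t} \<and> card E = Mv c t" by (intro exI[of _ E]) simp
  then show ?thesis unfolding EE_def by (rule someI_ex)
qed

interpretation CC: constr qq "EE c" for c
proof
  fix t show "EE c t \<subseteq> {e. length e = qq t}" using EE_props[of c t] by (rule conjunct1)
qed

lemma m_mval: "CC.m c t = mval c t"
proof -
  have "CC.m c t = real (Mv c t) * (1/2) ^ qq t" using EE_props[of c t] by (simp add: CC.m_def)
  also have "\<dots> = real (Mv c t) / real ((2::nat) ^ qq t)" by (simp add: power_one_over)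
  also have "\<dots> = mval c t" unfolding qq_KK mval_def ..
  finally show ?thesis .
qed


lemma mval_approx:
  assumes c0: "0 \<le> cy c t" "cy c t \<le> 1"
  shows "\<bar>mval c t - cy c t\<bar> \<le> 1 / real (KK t)"
proof -
  let ?K = "KK t"
  let ?Kr = "real (KK t)"
  let ?v = "cy c t * ?Kr"
  let ?f = "\<lfloor>?v\<rfloor>"
  let ?i = "idx c t"
  have Kpos: "0 < ?Kr" using KK_pos[of t] by simp
  have v0: "0 \<le> ?v" using c0 by simp
  have v1: "?v \<le> ?Kr" using c0 Kpos by (simp add: mult_left_le_one_le)
  have f0: "0 \<le> ?f" using v0 by simp
  have fn: "real (nat ?f) = of_int ?f" using f0 by simp
  have ilow: "real ?i \<le> ?v"
  proof -
    have "?i \<le> nat ?f" by (simp add: idx_def)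
    then have "real ?i \<le> real (nat ?f)" by simp
    also have "\<dots> \<le> ?v" using fn by simp
    finally show ?thesis .
  qed
  have ihigh: "?v \<le> real ?i + 1"
  proof (cases "nat ?f \<le> ?K - 1")
    case True
    then have "?i = nat ?f" by (simp add: idx_def)
    then show ?thesis using fn by linarith
  next
    case False
    then have "?i = ?K - 1" by (simp add: idx_def)
    then have "real ?i + 1 = ?Kr" using KK_pos[of t] by (simp add: of_nat_diff)
    then show ?thesis using v1 by simp
  qed
  define sv where "sv = (if even (length t) then 1 else 3 :: nat)"
  have sv: "1 \<le> sv" "sv \<le> 3" by (simp_all add: sv_def)
  have mK: "mval c t * ?Kr = real ?i + real sv / 4"
    using Kpos by (simp add: mval_def Mv_def sv_def field_simps)
  have "\<bar>mval c t * ?Kr - ?v\<bar> \<le> 1"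
    using mK ilow ihigh sv by (simp add: abs_le_iff; linarith)
  moreover have "mval c t * ?Kr - ?v = (mval c t - cy c t) * ?Kr" by (simp add: algebra_simps)
  ultimately have "\<bar>mval c t - cy c t\<bar> * ?Kr \<le> 1" by (simp add: abs_mult)
  then show ?thesis using Kpos by (simp add: field_simps)
qed

lemma int_mod4: "\<bar>4 * (j::int) + 2\<bar> \<ge> 2" "\<bar>4 * (j::int) - 2\<bar> \<ge> 2"
  by presburger+

lemma mval_parity:
  assumes K: "KK t' = KK t" and l: "length t' = Suc (length t)"
  shows "1 / (2 * real (KK t)) \<le> \<bar>mval c t - mval c t'\<bar>"
proof -
  let ?Kr = "real (KK t)"
  have Kpos: "0 < ?Kr" using KK_pos[of t] by simp
  define j where "j = int (idx c t) - int (idx c t')"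
  have z: "2 \<le> \<bar>int (Mv c t) - int (Mv c t')\<bar>"
  proof (cases "even (length t)")
    case True
    then have "int (Mv c t) - int (Mv c t') = 4 * j - 2" using l by (simp add: Mv_def j_def)
    then show ?thesis using int_mod4(2)[of j] by simp
  next
    case False
    then have "int (Mv c t) - int (Mv c t') = 4 * j + 2" using l by (simp add: Mv_def j_def)
    then show ?thesis using int_mod4(1)[of j] by simp
  qed
  have "(mval c t - mval c t') * (4 * ?Kr) = real (Mv c t) - real (Mv c t')"
    using Kpos K by (simp add: mval_def field_simps)
  also have "\<bar>\<dots>\<bar> = real_of_int \<bar>int (Mv c t) - int (Mv c t')\<bar>" by simp
  finally have "2 \<le> \<bar>mval c t - mval c t'\<bar> * (4 * ?Kr)"
    using z by (simp add: abs_mult)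
  then show ?thesis using Kpos by (simp add: field_simps)
qed


lemma ones_restr: "ones (restr x n) = card {i. i < n \<and> x i}"
proof -
  have "ones (restr x n) = card {i. i < length (restr x n) \<and> id (restr x n ! i)}"
    unfolding ones_def by (rule length_filter_conv_card)
  also have "{i. i < length (restr x n) \<and> id (restr x n ! i)} = {i. i < n \<and> x i}" by auto
  finally show ?thesis .
qed

lemma ones_grow:
  assumes x: "x \<in> Ncal"
  shows "\<exists>n0. \<forall>n\<ge>n0. B \<le> ones (restr x n)"
proof -
  have inf: "infinite {i. x i}" using x by (simp add: Ncal_def)
  obtain S where S: "S \<subseteq> {i. x i}" "finite S" "card S = B"
    using infinite_arbitrarily_large[OF inf] by blast
  obtain n0 where n0: "S \<subseteq> {..<n0}" using finite_nat_bounded[OF S(2)] by (elim exE)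
  have "B \<le> ones (restr x n)" if n: "n0 \<le> n" for n
  proof -
    have "S \<subseteq> {i. i < n \<and> x i}" using S(1) n0 n by auto
    then have "card S \<le> card {i. i < n \<and> x i}" by (rule card_mono[rotated]) simp
    then show ?thesis using S(3) by (simp add: ones_restr)
  qed
  then show ?thesis by blast
qed

lemma ones_stable:
  assumes x: "x \<notin> Ncal"
  shows "\<exists>n1. \<forall>n\<ge>n1. ones (restr x n) = card {i. x i}"
proof -
  have fin: "finite {i. x i}" using x by (simp add: Ncal_def)
  obtain n1 where n1: "{i. x i} \<subseteq> {..<n1}" using finite_nat_bounded[OF fin] by (elim exE)
  have "ones (restr x n) = card {i. x i}" if n: "n1 \<le> n" for n
  proof -
    have "{i. i < n \<and> x i} = {i. x i}" using n1 n by auto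
    then show ?thesis by (simp add: ones_restr)
  qed
  then show ?thesis by blast
qed

lemma cat_True_Ncal: "cat u (\<lambda>_. True) \<in> Ncal"
proof -
  have sub: "{length u..} \<subseteq> {i. cat u (\<lambda>_. True) i}" by (auto simp: cat_def)
  have "infinite {length u..}" by (rule infinite_Ici)
  then have "infinite {i. cat u (\<lambda>_. True) i}" by (rule infinite_super[OF sub])
  then show ?thesis unfolding Ncal_def by simp
qed

lemma cy_conv:
  assumes cont: "continuous_map (subtopology cantor_top Ncal) euclideanreal c" and x: "x \<in> Ncal"
  shows "(\<lambda>n. cy c (restr x n)) \<longlonglongrightarrow> c x"
proof (rule LIMSEQ_I)
  fix r :: real assume r: "0 < r"
  let ?V = "{v. \<bar>v - c x\<bar> < r}"
  have "open ?V" using open_ball[of "c x" r] by (simp add: ball_def dist_real_def abs_minus_commute)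
  then have "openin euclideanreal ?V" by simp
  then have "openin (subtopology cantor_top Ncal) {y \<in> topspace (subtopology cantor_top Ncal). c y \<in> ?V}"
    using cont by (rule openin_continuous_map_preimage[rotated])
  then obtain U where U: "openin cantor_top U" "{y \<in> topspace (subtopology cantor_top Ncal). c y \<in> ?V} = U \<inter> Ncal"
    unfolding openin_subtopology by (elim exE conjE) simp
  have U2: "(y \<in> Ncal \<and> \<bar>c y - c x\<bar> < r) \<longleftrightarrow> (y \<in> U \<and> y \<in> Ncal)" for y
    using U(2) unfolding set_eq_iff by simp
  have "x \<in> U" using U2[of x] x r by simp
  then obtain n0 where n0: "Nbhd (restr x n0) \<subseteq> U" using openin_cantor_Nbhd[OF U(1)] by blast
  have "norm (cy c (restr x n) - c x) < r" if n: "n0 \<le> n" for n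
  proof -
    let ?y = "cat (restr x n) (\<lambda>_. True)"
    have "restr ?y n0 = take n0 (restr x n)" using n by (intro restr_cat_le) simp
    also have "\<dots> = restr x n0" using n by (rule take_restr)
    finally have "?y \<in> Nbhd (restr x n0)" by (simp add: mem_Nbhd)
    then have "?y \<in> U" using n0 by blast
    then have "\<bar>c ?y - c x\<bar> < r" using U2[of ?y] cat_True_Ncal[of "restr x n"] by simp
    then show ?thesis by (simp add: cy_def)
  qed
  then show "\<exists>no. \<forall>n\<ge>no. norm (cy c (restr x n) - c x) < r" by blast
qed


lemma mval_conv:
  assumes cont: "continuous_map (subtopology cantor_top Ncal) euclideanreal c"
    and rng: "c ` Ncal \<subseteq> {0..1}" and x: "x \<in> Ncal"
  shows "(\<lambda>n. mval c (restr x n)) \<longlonglongrightarrow> c x"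
proof (rule LIMSEQ_I)
  fix r :: real assume r: "0 < r"
  then have r2: "0 < r / 2" by simp
  from LIMSEQ_D[OF cy_conv[OF cont x] r2] obtain n1 where n1: "\<forall>n\<ge>n1. norm (cy c (restr x n) - c x) < r / 2" by blast
  from CC.half_pow_small[OF r2] obtain B where B: "\<forall>n\<ge>B. (1/2::real) ^ n < r / 2" by blast
  obtain n2 where n2: "\<forall>n\<ge>n2. B \<le> ones (restr x n)" using ones_grow[OF x] by blast
  have "norm (mval c (restr x n) - c x) < r" if n: "max n1 n2 \<le> n" for n
  proof -
    have cyb: "0 \<le> cy c (restr x n)" "cy c (restr x n) \<le> 1"
      using rng cat_True_Ncal[of "restr x n"] by (auto simp: cy_def)
    have a: "\<bar>mval c (restr x n) - cy c (restr x n)\<bar> \<le> 1 / real (KK (restr x n))"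
      by (rule mval_approx[OF cyb])
    have "1 / real (KK (restr x n)) = (1/2) ^ (ones (restr x n) + 2)"
      by (simp add: KK_def power_one_over)
    also have "\<dots> \<le> (1/2) ^ ones (restr x n)" by (rule power_decreasing) simp_all
    also have "\<dots> < r / 2" using B n2 n by simp
    finally have "\<bar>mval c (restr x n) - cy c (restr x n)\<bar> < r / 2" using a by linarith
    moreover have "\<bar>cy c (restr x n) - c x\<bar> < r / 2" using n1 n by simp
    ultimately show ?thesis using abs_triangle_ineq[of "mval c (restr x n) - cy c (restr x n)" "cy c (restr x n) - c x"] by simp
  qed
  then show "\<exists>no. \<forall>n\<ge>no. norm (mval c (restr x n) - c x) < r" by blast
qed

lemma mval_osc:
  assumes x: "x \<notin> Ncal"
  shows "\<exists>\<delta>>0. \<forall>n0. \<exists>n\<ge>n0. \<delta> \<le> \<bar>mval c (restr x n) - mval c (restr x (Suc n))\<bar>"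
proof -
  obtain n1 where n1: "\<forall>n\<ge>n1. ones (restr x n) = card {i. x i}" using ones_stable[OF x] by blast
  let ?K = "(2::nat) ^ (card {i. x i} + 2)"
  have H: "1 / (2 * real ?K) \<le> \<bar>mval c (restr x n) - mval c (restr x (Suc n))\<bar>" if n: "n1 \<le> n" for n
  proof -
    have k1: "KK (restr x n) = ?K" using n1 n by (simp add: KK_def)
    have k2: "KK (restr x (Suc n)) = ?K" using n1 n by (simp add: KK_def del: restr_Suc)
    show ?thesis using mval_parity[of "restr x (Suc n)" "restr x n" c] k1 k2 by simp
  qed
  have "0 < 1 / (2 * real ?K)" by simp
  moreover have "\<exists>n\<ge>n0. 1 / (2 * real ?K) \<le> \<bar>mval c (restr x n) - mval c (restr x (Suc n))\<bar>" for n0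
    using H[of "max n0 n1"] by (intro exI[of _ "max n0 n1"]) simp
  ultimately show ?thesis by blast
qed


lemma Cyl_open: "openin cantor_top (Cyl L E)"
proof (unfold openin_cantor_iff, intro ballI)
  fix z assume "z \<in> Cyl L E"
  then have "Nbhd (restr z L) \<subseteq> Cyl L E" by (auto simp: Cyl_def mem_Nbhd)
  then show "\<exists>n. Nbhd (restr z n) \<subseteq> Cyl L E" by blast
qed

lemma Cyl_closed: "closedin cantor_top (Cyl L E)"
proof -
  have "UNIV - Cyl L E = Cyl L (- E)" by (auto simp: Cyl_def)
  then have "openin cantor_top (UNIV - Cyl L E)" using Cyl_open by simp
  then show ?thesis by (simp add: closedin_def)
qed

lemma closed_offspring_OS:
  assumes "\<And>t. cantor_top closure_of (D t) = D t"
  shows "closed_offspring T D = OS T D"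
  unfolding closed_offspring_def OS_def assms by blast

lemma phi_full: "Nbhd u \<subseteq> A \<Longrightarrow> phi A u = 1"
proof -
  assume "Nbhd u \<subseteq> A"
  then have "A \<inter> Nbhd u = Nbhd u" by blast
  then show "phi A u = 1" by (simp add: phi_def measure_Nbhd power_one_over)
qed

lemma Cyl_dualistic: "dualistic (Cyl L E)"
proof -
  have "has_density (Cyl L E) z 0 \<or> has_density (Cyl L E) z 1" for z
  proof (cases "restr z L \<in> E")
    case True
    have "ratio (Cyl L E) z n = 1" if n: "L \<le> n" for n
    proof -
      have "Nbhd (restr z n) \<subseteq> Cyl L E"
      proof
        fix w assume "w \<in> Nbhd (restr z n)"
        then have "restr w n = restr z n" by (simp add: mem_Nbhd)
        then have "restr w L = restr z L" using n by (metis take_restr)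
        then show "w \<in> Cyl L E" using True by (simp add: Cyl_def)
      qed
      then show ?thesis using ratio_phi[OF Cyl_sets] phi_full by simp
    qed
    then have "eventually (\<lambda>n. ratio (Cyl L E) z n = 1) sequentially" by (rule eventually_sequentiallyI)
    then have "has_density (Cyl L E) z 1" unfolding has_density_def by (rule tendsto_eventually)
    then show ?thesis by simp
  next
    case False
    have "ratio (Cyl L E) z n = 0" if n: "L \<le> n" for n
    proof -
      have "Cyl L E \<inter> Nbhd (restr z n) = {}"
      proof (rule ccontr)
        assume "Cyl L E \<inter> Nbhd (restr z n) \<noteq> {}"
        then obtain w where w: "w \<in> Cyl L E" "w \<in> Nbhd (restr z n)" by blast
        then have "restr w n = restr z n" by (simp add: mem_Nbhd)
        then have "restr w L = restr z L" using n by (metis take_restr)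
        then show False using w(1) False by (simp add: Cyl_def)
      qed
      then show ?thesis using ratio_phi[OF Cyl_sets] phi_empty by simp
    qed
    then have "eventually (\<lambda>n. ratio (Cyl L E) z n = 0) sequentially" by (rule eventually_sequentiallyI)
    then have "has_density (Cyl L E) z 0" unfolding has_density_def by (rule tendsto_eventually)
    then show ?thesis by simp
  qed
  moreover have "Cyl L E \<in> sets (completion mu)" by simp
  ultimately show ?thesis by (simp add: dualistic_def)
qed

lemma restr_cat0: "restr (cat e z) (length e) = e"
  using restr_cat[of e z 0] by (simp add: restr_def)

lemma DD_nonempty: "CC.DD c t \<noteq> {}"
proof -
  have "EE c t \<noteq> {}" using EE_props[of c t] Mv_ge1[of c t] by auto
  then obtain e where e: "e \<in> EE c t" by blast
  then have "length e = qq t" using EE_props[of c t] by auto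
  then have "cat e (\<lambda>_. False) \<in> CC.DD c t" using e restr_cat0[of e] by (simp add: CC.DD_def Cyl_def)
  then show ?thesis by blast
qed

lemma DD_not_UNIV: "CC.DD c t \<noteq> UNIV"
proof -
  have "\<not> {e::bool list. length e = qq t} \<subseteq> EE c t"
  proof
    assume "{e::bool list. length e = qq t} \<subseteq> EE c t"
    then have "card {e::bool list. length e = qq t} \<le> card (EE c t)"
      using EE_props[of c t] finite_len by (intro card_mono) (auto intro: finite_subset)
    moreover have "card {e::bool list. length e = qq t} = 2 ^ qq t"
      using card_lists_length_eq[of "UNIV::bool set" "qq t"] by simp
    ultimately show False using EE_props[of c t] Mv_lt[of c t] by simp
  qed
  then obtain e where e: "length e = qq t" "e \<notin> EE c t" by blast
  then have "cat e (\<lambda>_. False) \<notin> CC.DD c t" using restr_cat0[of e] by (simp add: CC.DD_def Cyl_def)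
  then show ?thesis by blast
qed

lemma DD_compliant: "compliant T (CC.DD c)"
  unfolding compliant_def
  using DD_nonempty DD_not_UNIV Cyl_dualistic
  by (simp add: CC.DD_def interior_of_openin[OF Cyl_open] closure_of_closedin[OF Cyl_closed])

lemma F_eq: "closed_offspring T (CC.DD c) = OS T (CC.DD c)"
  by (rule closed_offspring_OS) (simp add: CC.DD_def closure_of_closedin[OF Cyl_closed])

theorem theorem4p1:
  fixes c :: "cantor \<Rightarrow> real"
  assumes "continuous_map (subtopology cantor_top Ncal) euclideanreal c"
    and "c ` Ncal \<subseteq> {0..1}"
  shows "\<exists>F :: bool list set \<Rightarrow> cantor set.
           continuous_map (subtopology tree_top PrTr2) vietoris F \<and>
           (\<forall>T\<in>PrTr2.
              (\<exists>D. compliant T D \<and> F T = closed_offspring T D) \<and>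
              (\<forall>x\<in>branches T. x \<in> Ncal \<longleftrightarrow> oscillation (F T) (stretch x) = 0) \<and>
              (\<forall>x\<in>branches T \<inter> Ncal. has_density (F T) (stretch x) (c x)))"
proof (intro exI[of _ "\<lambda>T. closed_offspring T (CC.DD c)"] conjI ballI)
  show "continuous_map (subtopology tree_top PrTr2) vietoris (\<lambda>T. closed_offspring T (CC.DD c))"
    unfolding F_eq by (rule OS_continuous[OF CC.det])
next
  fix T assume "T \<in> PrTr2"
  then show "\<exists>D. compliant T D \<and> closed_offspring T (CC.DD c) = closed_offspring T D"
    using DD_compliant by blast
next
  fix T x assume T: "T \<in> PrTr2" and x: "x \<in> branches T \<inter> Ncal"
  have "(\<lambda>n. CC.m c (restr x n)) \<longlonglongrightarrow> c x"
    unfolding m_mval using mval_conv[OF assms] x by blast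
  then show "has_density (closed_offspring T (CC.DD c)) (stretch x) (c x)"
    unfolding has_density_def F_eq using CC.ratio_conv[OF T] x by blast
next
  fix T x assume T: "T \<in> PrTr2" and x: "x \<in> branches T"
  let ?X = "ratio (OS T (CC.DD c)) (stretch x)"
  have b: "0 \<le> ?X n" "?X n \<le> 1" for n
    using ratio_phi[OF CC.G_sets[OF T]] phi_bounds by simp_all
  have o: "oscillation (closed_offspring T (CC.DD c)) (stretch x) = 0 \<longleftrightarrow> convergent ?X"
    unfolding F_eq oscillation_def by (rule osc_zero_iff[OF b])
  show "x \<in> Ncal \<longleftrightarrow> oscillation (closed_offspring T (CC.DD c)) (stretch x) = 0"
  proof
    assume xN: "x \<in> Ncal"
    have "(\<lambda>n. CC.m c (restr x n)) \<longlonglongrightarrow> c x"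
      unfolding m_mval using mval_conv[OF assms xN] .
    then have "?X \<longlonglongrightarrow> c x" by (rule CC.ratio_conv[OF T x])
    then show "oscillation (closed_offspring T (CC.DD c)) (stretch x) = 0"
      unfolding o by (auto simp: convergent_def)
  next
    assume oz: "oscillation (closed_offspring T (CC.DD c)) (stretch x) = 0"
    show "x \<in> Ncal"
    proof (rule ccontr)
      assume xN: "x \<notin> Ncal"
      obtain \<delta> where d: "0 < \<delta>" "\<And>n0. \<exists>n\<ge>n0. \<delta> \<le> \<bar>mval c (restr x n) - mval c (restr x (Suc n))\<bar>"
        using mval_osc[OF xN, of c] by blast
      have "\<not> convergent ?X"
        using CC.ratio_nonconv[OF T x d(1)] d(2) unfolding m_mval by blast
      then show False using oz o by simp
    qed
  qed
qed

end
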